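(* Let $n\in\mathbb{N}$, $d\in\mathbb{N}_0$, $c_1,\ldots,c_d\in\mathbb{N}\setminus\{2\}$, and $z_0,\ldots,z_d\in\mathbb{C}$ with $|z_j|<1$. Put $c_0=1$, $c_{d+1}=0$, $\delta_i=\delta(c_i)+\delta(c_{i+1})$, $k_{-1}=0$. Then for every integer $u$ with $0\le u\le d$, $$\sum_{\substack{a_0,\ldots,a_d\geq0\\ a_u\geq1}}t^{\star}_n(\{2\}^{a_0},c_1,\{2\}^{a_1},\ldots,c_d,\{2\}^{a_d})z_0^{2a_0}\cdots z_d^{2a_d} = z_u^2\cdot\frac{n\binom{2n}{n}}{2^{4n-2}}\sum_{n\geq k_0\geq\cdots\geq k_d\geq1}\binom{2n-1}{n-k_0}\frac{1}{(2k_u-1)^2}\prod_{i=0}^{d}\frac{(-1)^{k_i\delta_i}(2k_i-1)^{\delta_i-1}}{(2k_i-1)^2-z_i^2}V_{k_{i-1},k_i}^{\#}(\{1\}^{c_i-3}).$$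
   Context: $t^{\star}_n(\boldsymbol{s})=\sum_{n\geq k_1\geq\cdots\geq k_r\geq1}\prod_{j=1}^r(2k_j-1)^{-s_j}$ for an index $\boldsymbol{s}=(s_1,\ldots,s_r)$, $t^\star_n(\emptyset)=1$. $\{s\}^a$ denotes $s$ repeated $a$ times; for $a\le 0$, $\{1\}^{a}$ is the empty index. $\triangle(k,m)=0$ if $k=m$, $1$ otherwise. For an index $\boldsymbol{s}=(s_1,\ldots,s_r)$ and $k,m\in\mathbb{N}_0$: if $\boldsymbol{s}\ne\emptyset$ and $k\ge m$, $V^{\#}_{k,m}(\boldsymbol{s})=\frac{2k-1}{2m-1}\sum_{k\geq l_1\geq\cdots\geq l_r\geq m}\frac{2^{\triangle(k,l_1)+\triangle(l_1,l_2)+\cdots+\triangle(l_r,m)}}{(2l_1-1)^{s_1}\cdots(2l_r-1)^{s_r}}$; otherwise $V^{\#}_{k,m}(\boldsymbol{s})=\left(2\cdot\frac{2k-1}{2m-1}\right)^{\triangle(k,m)}$. $\delta(0)=2$, $\delta(1)=1$, $\delta(c)=0$ for $c\ge3$. *)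

theory Defs
  imports "HOL-Analysis.Analysis"
begin

fun tstar :: "nat \<Rightarrow> nat list \<Rightarrow> real" where
  "tstar n [] = 1"
| "tstar n (s # ss) = (\<Sum>k\<in>{1..n}. tstar k ss / (2 * real k - 1) ^ s)"

definition tri :: "nat \<Rightarrow> nat \<Rightarrow> nat" where
  "tri k m = (if k = m then 0 else 1)"

fun Vsum :: "nat \<Rightarrow> nat \<Rightarrow> nat list \<Rightarrow> real" where
  "Vsum k m [] = 2 ^ tri k m"
| "Vsum k m (s # ss) = (\<Sum>l\<in>{m..k}. 2 ^ tri k l / (2 * real l - 1) ^ s * Vsum l m ss)"

definition Vsharp :: "nat \<Rightarrow> nat \<Rightarrow> nat list \<Rightarrow> real" where
  "Vsharp k m s = (if s \<noteq> [] \<and> k \<ge> m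
     then (2 * real k - 1) / (2 * real m - 1) * Vsum k m s
     else (2 * ((2 * real k - 1) / (2 * real m - 1))) ^ tri k m)"

text \<open>delta(0)=2, delta(1)=1, delta(c)=0 for c>=3 (value at 2 is irrelevant, set to 0)\<close>
fun delta :: "nat \<Rightarrow> nat" where
  "delta 0 = 2"
| "delta (Suc 0) = 1"
| "delta _ = 0"

definition cext :: "nat \<Rightarrow> (nat \<Rightarrow> nat) \<Rightarrow> nat \<Rightarrow> nat" where
  "cext d c i = (if i = 0 then 1 else if i = Suc d then 0 else c i)"

definition deltas :: "nat \<Rightarrow> (nat \<Rightarrow> nat) \<Rightarrow> nat \<Rightarrow> nat" where
  "deltas d c i = delta (cext d c i) + delta (cext d c (Suc i))"

definition tidx :: "nat \<Rightarrow> (nat \<Rightarrow> nat) \<Rightarrow> nat list \<Rightarrow> nat list" where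
  "tidx d c a = replicate (a ! 0) 2 @ concat (map (\<lambda>i. c i # replicate (a ! i) 2) [1..<Suc d])"

definition chains :: "nat \<Rightarrow> nat \<Rightarrow> nat list set" where
  "chains n d = {ks. length ks = Suc d \<and> ks ! 0 \<le> n \<and> ks ! d \<ge> 1 \<and>
                     (\<forall>i<d. ks ! Suc i \<le> ks ! i)}"

definition kprev :: "nat list \<Rightarrow> nat \<Rightarrow> nat" where
  "kprev ks i = (if i = 0 then 0 else ks ! (i - 1))"

end

theory Submission
  imports Defs
begin

definition xx :: "nat \<Rightarrow> real" where "xx l = (2 * real l - 1)^2"
definition ff :: "nat \<Rightarrow> nat \<Rightarrow> real" where "ff M k = (\<Prod>l\<in>{k<..M}. xx l / (xx l - xx k))"
definition gg :: "nat \<Rightarrow> nat \<Rightarrow> real" where "gg m k = (\<Prod>l\<in>{m..<k}. xx l / (xx l - xx k))"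
definition Blk :: "complex \<Rightarrow> nat \<Rightarrow> nat \<Rightarrow> complex" where
  "Blk w hi lo = (\<Prod>l\<in>{lo..hi}. of_real (xx l) / (of_real (xx l) - w))"

lemma xx_diff: "xx l - xx k = 4 * (real l - real k) * (real l + real k - 1)"
  unfolding xx_def by (simp add: power2_eq_square algebra_simps)

lemma xx_neq: "1 \<le> l \<Longrightarrow> 1 \<le> k \<Longrightarrow> l \<noteq> k \<Longrightarrow> xx l \<noteq> xx k"
proof
  assume "1 \<le> l" "1 \<le> k" "l \<noteq> k" "xx l = xx k"
  then have "xx l - xx k = 0" by simp
  then show False using \<open>1 \<le> l\<close> \<open>1 \<le> k\<close> \<open>l \<noteq> k\<close> by (simp add: xx_diff)
qed

lemma xx_pos: "1 \<le> l \<Longrightarrow> xx l \<ge> 1"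
proof -
  assume "1 \<le> l" then have "2 * real l - 1 \<ge> 1" by simp
  then show ?thesis unfolding xx_def by (metis one_le_power)
qed

lemma ff_refl[simp]: "ff k k = 1" by (simp add: ff_def)
lemma gg_refl[simp]: "gg k k = 1" by (simp add: gg_def)

lemma ff_Suc: "k \<le> M \<Longrightarrow> ff (Suc M) k = ff M k * (xx (Suc M) / (xx (Suc M) - xx k))"
proof -
  assume "k \<le> M"
  then have "{k<..Suc M} = insert (Suc M) {k<..M}" by auto
  then show ?thesis unfolding ff_def by (simp add: mult.commute)
qed

lemma gg_lo: "m < k \<Longrightarrow> gg m k = xx m / (xx m - xx k) * gg (Suc m) k"
  unfolding gg_def by (simp add: prod.atLeast_Suc_lessThan)

lemma pf2: fixes a b w :: complex
  assumes "a \<noteq> b" "a \<noteq> w" "b \<noteq> w"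
  shows "a/(a-w) * (b/(b-w)) = b/(b-a) * (a/(a-w)) + a/(a-b) * (b/(b-w))"
proof -
  have 1: "a - w \<noteq> 0" "b - w \<noteq> 0" "b - a \<noteq> 0" "a - b \<noteq> 0" using assms by auto
  have "b/(b-a) * (a/(a-w)) + a/(a-b) * (b/(b-w)) = (a*b*(b-w) - a*b*(a-w)) / ((b-a)*(a-w)*(b-w))"
    using 1 by (simp add: divide_simps) (simp add: algebra_simps)
  also have "\<dots> = a * b / ((a-w)*(b-w))"
    using 1 by (simp add: divide_simps) (simp add: algebra_simps)
  finally show ?thesis by simp
qed

lemma Blk_Suc: "lo \<le> Suc hi \<Longrightarrow> Blk w (Suc hi) lo = Blk w hi lo * (of_real (xx (Suc hi)) / (of_real (xx (Suc hi)) - w))"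
  unfolding Blk_def by (simp add: prod.nat_ivl_Suc' mult.commute)

lemma Blk_gg: "Blk (of_real (xx k)) (k - 1) lo = of_real (gg lo k)" if "1 \<le> k"
proof -
  have "{lo..k-1} = {lo..<k}" using that by auto
  then show ?thesis unfolding Blk_def gg_def by (simp add: of_real_prod)
qed

lemma PF:
  assumes "1 \<le> lo" "lo \<le> hi"
  shows "\<forall>w. (\<forall>l\<in>{lo..hi}. w \<noteq> of_real (xx l)) \<longrightarrow>
    Blk w hi lo = (\<Sum>k\<in>{lo..hi}. of_real (ff hi k * gg lo k) * (of_real (xx k) / (of_real (xx k) - w)))"
  using assms(2)
proof (induction hi rule: dec_induct)
  case base
  then show ?case by (simp add: Blk_def)
next
  case (step hi)
  show ?case
  proof (intro allI impI)
    fix w :: complex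
    assume w: "\<forall>l\<in>{lo..Suc hi}. w \<noteq> of_real (xx l)"
    define X where "X = (\<lambda>l. (of_real (xx l) :: complex))"
    have Xinj: "X l \<noteq> X k" if "1 \<le> l" "1 \<le> k" "l \<noteq> k" for l k
      using xx_neq[OF that] unfolding X_def by simp
    have IHw: "Blk w hi lo = (\<Sum>k\<in>{lo..hi}. of_real (ff hi k * gg lo k) * (X k / (X k - w)))"
      using step.IH w unfolding X_def by auto
    have IHX: "Blk (X (Suc hi)) hi lo = (\<Sum>k\<in>{lo..hi}. of_real (ff hi k * gg lo k) * (X k / (X k - X (Suc hi))))"
    proof -
      have "\<forall>l\<in>{lo..hi}. X (Suc hi) \<noteq> of_real (xx l)"
      proof
        fix l assume "l \<in> {lo..hi}"
        then have "1 \<le> l" "l \<noteq> Suc hi" using assms(1) by auto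
        then show "X (Suc hi) \<noteq> of_real (xx l)" using Xinj[of "Suc hi" l] unfolding X_def by auto
      qed
      then show ?thesis using step.IH unfolding X_def by blast
    qed
    have gX: "Blk (X (Suc hi)) hi lo = of_real (gg lo (Suc hi))"
      using Blk_gg[of "Suc hi" lo] unfolding X_def by simp
    have wS: "w \<noteq> X (Suc hi)" using w step.hyps unfolding X_def by auto
    have wk: "w \<noteq> X k" if "k \<in> {lo..hi}" for k using w that unfolding X_def by auto
    have "Blk w (Suc hi) lo = Blk w hi lo * (X (Suc hi) / (X (Suc hi) - w))"
      using Blk_Suc[of lo hi w] step.hyps unfolding X_def by simp
    also have "\<dots> = (\<Sum>k\<in>{lo..hi}. of_real (ff hi k * gg lo k) * (X k / (X k - w) * (X (Suc hi) / (X (Suc hi) - w))))"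
      unfolding IHw sum_distrib_right by (simp add: mult.assoc)
    also have "\<dots> = (\<Sum>k\<in>{lo..hi}. of_real (ff hi k * gg lo k) * (X (Suc hi) / (X (Suc hi) - X k) * (X k / (X k - w))))
        + (\<Sum>k\<in>{lo..hi}. of_real (ff hi k * gg lo k) * (X k / (X k - X (Suc hi)))) * (X (Suc hi) / (X (Suc hi) - w))"
      unfolding sum_distrib_right sum.distrib[symmetric]
    proof (rule sum.cong[OF refl])
      fix k assume k: "k \<in> {lo..hi}"
      have "X k \<noteq> X (Suc hi)" using Xinj[of k "Suc hi"] k assms(1) by auto
      then have P: "X k / (X k - w) * (X (Suc hi) / (X (Suc hi) - w)) =
        X (Suc hi) / (X (Suc hi) - X k) * (X k / (X k - w)) + X k / (X k - X (Suc hi)) * (X (Suc hi) / (X (Suc hi) - w))"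
        using pf2 wk[OF k] wS by metis
      show "of_real (ff hi k * gg lo k) * (X k / (X k - w) * (X (Suc hi) / (X (Suc hi) - w))) =
         of_real (ff hi k * gg lo k) * (X (Suc hi) / (X (Suc hi) - X k) * (X k / (X k - w))) +
         of_real (ff hi k * gg lo k) * (X k / (X k - X (Suc hi))) * (X (Suc hi) / (X (Suc hi) - w))"
        unfolding P by (simp only: distrib_left mult.assoc)
    qed
    also have "(\<Sum>k\<in>{lo..hi}. of_real (ff hi k * gg lo k) * (X (Suc hi) / (X (Suc hi) - X k) * (X k / (X k - w))))
       = (\<Sum>k\<in>{lo..hi}. of_real (ff (Suc hi) k * gg lo k) * (X k / (X k - w)))"
    proof (rule sum.cong[OF refl])
      fix k assume k: "k \<in> {lo..hi}"
      then show "of_real (ff hi k * gg lo k) * (X (Suc hi) / (X (Suc hi) - X k) * (X k / (X k - w))) =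
            of_real (ff (Suc hi) k * gg lo k) * (X k / (X k - w))"
        using ff_Suc[of k hi] unfolding X_def by simp
    qed
    also have "(\<Sum>k\<in>{lo..hi}. of_real (ff hi k * gg lo k) * (X k / (X k - X (Suc hi)))) = of_real (gg lo (Suc hi))"
      using IHX gX by simp
    finally show "Blk w (Suc hi) lo = (\<Sum>k\<in>{lo..Suc hi}. of_real (ff (Suc hi) k * gg lo k) * (of_real (xx k) / (of_real (xx k) - w)))"
      using step.hyps unfolding X_def by (simp add: sum.nat_ivl_Suc')
  qed
qed


definition NN :: "nat \<Rightarrow> real" where "NN K = real K * real (2*K choose K) / 2^(4*K-2)"

lemma NN_fact: "NN K = real K * fact (2*K) / (fact K * fact K) / 2^(4*K-2)"
  unfolding NN_def by (simp add: binomial_fact)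

lemma NN_Suc: assumes "1 \<le> K" shows "NN (Suc K) = NN K * (2*real K + 1) / (8 * real K)"
proof -
  have e: "4 * Suc K - 2 = (4*K - 2) + 4" using assms by simp
  define a where "a = (fact K :: real)"
  define b where "b = (fact (2*K) :: real)"
  define p where "p = (2::real)^(4*K-2)"
  define sK where "sK = real K + 1"
  have f1: "fact (2 * Suc K) = (2 * sK) * (2*real K + 1) * b"
    unfolding b_def sK_def by (simp add: fact_Suc algebra_simps)
  have f2: "fact (Suc K) = sK * a" unfolding a_def sK_def by (simp add: fact_Suc)
  have f3: "real (Suc K) = sK" unfolding sK_def by simp
  have pp: "(2::real)^(4*K-2+4) = p * 16" unfolding p_def by (simp add: power_add)
  have pos: "a > 0" "p > 0" "real K > 0" "sK > 0" using assms unfolding a_def p_def sK_def by auto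
  have "NN (Suc K) = sK * ((2 * sK) * (2*real K + 1) * b) / ((sK * a) * (sK * a)) / (p * 16)"
    unfolding NN_fact e f1 f2 f3 pp by simp
  also have "\<dots> = real K * b / (a * a) / p * (2*real K + 1) / (8 * real K)"
    using pos by (simp add: field_simps)
  also have "\<dots> = NN K * (2*real K + 1) / (8 * real K)"
    unfolding NN_fact a_def b_def p_def by simp
  finally show ?thesis .
qed

lemma NN_pos: "1 \<le> K \<Longrightarrow> NN K > 0"
  unfolding NN_def by simp

lemma binom_ratio0:
  "real (Suc (Suc N) choose Suc J) * (real (Suc J) * real (Suc N - J)) =
        real (N choose J) * (real (Suc (Suc N)) * real (Suc N))"
proof -
  have h1: "Suc J * (Suc (Suc N) choose Suc J) = Suc (Suc N) * (Suc N choose J)"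
    by (rule Suc_times_binomial)
  have h2: "(Suc N - J) * (Suc N choose J) = Suc N * (N choose J)"
    using binomial_absorb_comp[of "Suc N" J] by simp
  have "real (Suc J) * real (Suc (Suc N) choose Suc J) = real (Suc (Suc N)) * real (Suc N choose J)"
    using h1 by (metis of_nat_mult)
  moreover have "real (Suc N - J) * real (Suc N choose J) = real (Suc N) * real (N choose J)"
    using h2 by (metis of_nat_mult)
  ultimately show ?thesis by (metis mult.assoc mult.commute)
qed

lemma ff_binom:
  assumes "1 \<le> k" "k \<le> n"
  shows "ff n k = real ((2*n-1) choose (n-k)) * NN n / NN k"
  using assms(2)
proof (induction n rule: dec_induct)
  case base
  then show ?case using NN_pos[OF assms(1)] by simp
next
  case (step n)
  have n1: "1 \<le> n" using step.hyps assms by simp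
  have Nk: "NN k > 0" using NN_pos[OF assms(1)] .
  define N where "N = 2*n-1"
  define J where "J = n-k"
  have c1: "(2*Suc n - 1) choose (Suc n - k) = Suc (Suc N) choose Suc J"
  proof -
    have "2*Suc n - 1 = Suc (Suc N)" "Suc n - k = Suc J" using n1 step.hyps unfolding N_def J_def by auto
    then show ?thesis by metis
  qed
  define u where "u = real n + 1 - real k"
  define v where "v = real n + real k"
  have e2: "real (Suc J) = u" "real (Suc N - J) = v"
    "real (Suc (Suc N)) = 2*real n + 1" "real (Suc N) = 2 * real n" using assms step.hyps n1
    unfolding N_def J_def u_def v_def by (auto simp: of_nat_diff)
  have nz: "u \<noteq> 0" "v \<noteq> 0" "real n \<noteq> 0" unfolding u_def v_def using step.hyps n1 by auto
  have xd: "xx (Suc n) - xx k = 4 * u * v"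
    unfolding xx_diff u_def v_def by (simp add: algebra_simps)
  have xs: "xx (Suc n) = (2 * real n + 1)^2" unfolding xx_def by (simp add: algebra_simps)
  define C where "C = real ((2*n-1) choose (n-k))"
  have r: "real ((2*Suc n - 1) choose (Suc n - k)) = C * ((2*real n + 1) * (2 * real n)) / (u * v)"
    unfolding c1 C_def N_def[symmetric] J_def[symmetric]
    using binom_ratio0[of N J] nz unfolding e2 by (simp add: field_simps)
  have "ff (Suc n) k = C * NN n / NN k * (xx (Suc n) / (xx (Suc n) - xx k))"
    using ff_Suc[OF step.hyps(1)] step.IH unfolding C_def by simp
  also have "\<dots> = real ((2*Suc n - 1) choose (Suc n - k)) * NN (Suc n) / NN k"
    unfolding r NN_Suc[OF n1] xd unfolding xs using nz Nk
    by (simp add: field_simps power2_eq_square)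
  finally show ?case .
qed


definition Phi :: "nat \<Rightarrow> nat \<Rightarrow> nat \<Rightarrow> real" where
  "Phi c K k = (\<Sum>m\<in>{k..K}. gg m K * ff m k / (2*real m - 1)^c)"

lemma Phi_refl: "Phi c k k = 1 / (2*real k - 1)^c"
  unfolding Phi_def by simp

lemma gg_ratio:
  assumes "1 \<le> m" "m \<le> L"
  shows "gg m (Suc L) = gg m L * (- (2*real L - 1) * (real m + real L - 1) / (8*real L*(real L + 1 - real m)))"
  using assms(2)
proof (induction m rule: inc_induct)
  case base
  have L1: "1 \<le> L" using assms by simp
  have a: "gg L (Suc L) = xx L / (xx L - xx (Suc L))" using gg_lo[of L "Suc L"] by simp
  have b: "xx L - xx (Suc L) = - 8 * real L" unfolding xx_diff by (simp add: algebra_simps)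
  have c: "xx L = (2*real L - 1)^2" unfolding xx_def ..
  have "gg L (Suc L) = - ((2*real L - 1)^2) / (8 * real L)" unfolding a unfolding b unfolding c by simp
  then show ?case using L1 by (simp add: power2_eq_square field_simps)
next
  case (step n)
  have n1: "1 \<le> n" using step.hyps assms by simp
  have d1: "xx n - xx (Suc L) = 4 * (real n - real L - 1) * (real n + real L)" unfolding xx_diff by simp
  have d2: "xx n - xx L = 4 * (real n - real L) * (real n + real L - 1)" unfolding xx_diff by simp
  have nz: "real n - real L - 1 \<noteq> 0" "real n + real L \<noteq> 0" "real n - real L \<noteq> 0" "real n + real L - 1 \<noteq> 0"
    "real L \<noteq> 0" "real L + 1 - real n \<noteq> 0" "real L - real n \<noteq> 0" using step.hyps n1 by auto
  have "gg n (Suc L) = xx n / (xx n - xx (Suc L)) * gg (Suc n) (Suc L)" using gg_lo[of n "Suc L"] step.hyps by simp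
  also have "\<dots> = xx n / (xx n - xx (Suc L)) * (gg (Suc n) L * (- (2*real L - 1) * (real (Suc n) + real L - 1) / (8*real L*(real L + 1 - real (Suc n)))))"
    using step.IH by simp
  also have "gg (Suc n) L = gg n L * ((xx n - xx L) / xx n)"
  proof -
    define dd where "dd = xx n - xx L"
    have "dd \<noteq> 0" unfolding dd_def d2 using nz by simp
    moreover have "xx n \<noteq> 0" using xx_pos[OF n1] by simp
    moreover have "gg n L = xx n / dd * gg (Suc n) L" using gg_lo[of n L] step.hyps unfolding dd_def by simp
    ultimately show ?thesis unfolding dd_def[symmetric] by (simp add: field_simps)
  qed
  finally have e: "gg n (Suc L) = gg n L * (xx n / (xx n - xx (Suc L)) * ((xx n - xx L) / xx n) *
     (- (2*real L - 1) * (real (Suc n) + real L - 1) / (8*real L*(real L + 1 - real (Suc n)))))"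
    by (simp add: mult_ac)
  have key: "xx n / (xx n - xx (Suc L)) * ((xx n - xx L) / xx n) *
     (- (2*real L - 1) * (real (Suc n) + real L - 1) / (8*real L*(real L + 1 - real (Suc n))))
     = - (2*real L - 1) * (real n + real L - 1) / (8*real L*(real L + 1 - real n))"
  proof -
    define P where "P = real n - real L"
    define Q where "Q = real n + real L - 1"
    define R where "R = real n - real L - 1"
    define S where "S = real n + real L"
    define x where "x = xx n"
    define l where "l = real L"
    have nz': "P \<noteq> 0" "R \<noteq> 0" "Q \<noteq> 0" "S \<noteq> 0" "l \<noteq> 0" "x \<noteq> 0"
      using nz xx_pos[OF n1] unfolding P_def Q_def R_def S_def x_def l_def by (auto simp: algebra_simps)
    have r1: "xx n - xx (Suc L) = 4 * R * S" unfolding d1 R_def S_def by (simp add: algebra_simps)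
    have r2: "xx n - xx L = 4 * P * Q" unfolding d2 P_def Q_def by simp
    have r3: "real (Suc n) + real L - 1 = S" "real L + 1 - real (Suc n) = - P" "real L + 1 - real n = - R"
      "real n + real L - 1 = Q"
      unfolding P_def Q_def R_def S_def by auto
    have "x / (4 * R * S) * ((4 * P * Q) / x) * (- (2*l - 1) * S / (8*l*(- P)))
       = - (2*l - 1) * Q / (8*l*(- R))"
      using nz' by (simp add: field_simps)
    then show ?thesis unfolding r1 r2 unfolding r3 unfolding x_def[symmetric] l_def[symmetric] by simp
  qed
  show ?case unfolding e key ..
qed

lemma tsum_key: fixes m K k :: real
  assumes "m - K \<noteq> 0" "m+K-1 \<noteq> 0" "m+1-k \<noteq> 0" "m+k \<noteq> 0" "K-k \<noteq> 0" "K+k-1 \<noteq> 0"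
  shows "((K - m)*(m+K-1)/((K-k)*(K+k-1))) / (4*(m-K)*(m+K-1)) + 1/(4*(m+1-k)*(m+k))
       = ((K - (m+1))*((m+1)+K-1)/((K-k)*(K+k-1))) / (4*(m+1-k)*(m+k))"
proof -
  define D where "D = (K-k)*(K+k-1)"
  define A where "A = m - K"
  define B where "B = m+K-1"
  define P where "P = m+1-k"
  define Q where "Q = m+k"
  have nz: "D \<noteq> 0" "A \<noteq> 0" "B \<noteq> 0" "P \<noteq> 0" "Q \<noteq> 0" using assms unfolding D_def A_def B_def P_def Q_def by auto
  have e1: "K - m = - A" unfolding A_def by simp
  have e2: "(K - (m+1))*((m+1)+K-1) = D - P*Q" unfolding D_def P_def Q_def by (simp add: algebra_simps)
  have "(-A*B/D) / (4*A*B) + 1/(4*P*Q) = ((D - P*Q)/D) / (4*P*Q)"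
    using nz by (simp add: field_simps)
  then show ?thesis unfolding e1 e2 D_def[symmetric] A_def[symmetric] B_def[symmetric] P_def[symmetric] Q_def[symmetric]
    by simp
qed

lemma Tsum:
  assumes "1 \<le> k" "k < K" "k \<le> m"
  shows "m \<le> K \<longrightarrow> (\<Sum>j\<in>{k..m}. gg j K * ff j k / xx j) =
     gg m K * ff m k / xx m * ((real K - real m)*(real m + real K - 1)/((real K - real k)*(real K + real k - 1)))"
  using assms(3)
proof (induction m rule: dec_induct)
  case base
  have "(real K - real k)*(real k + real K - 1) \<noteq> 0" using assms by auto
  then show ?case by (simp add: algebra_simps)
next
  case (step m)
  show ?case
  proof
    assume mK: "Suc m \<le> K"
    have m1: "1 \<le> m" using step.hyps assms by simp
    define G where "G = gg (Suc m) K"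
    define F where "F = ff m k"
    have g: "gg m K = xx m / (xx m - xx K) * G" using gg_lo[of m K] mK G_def by simp
    have f: "ff (Suc m) k = F * (xx (Suc m) / (xx (Suc m) - xx k))" using ff_Suc[of k m] step.hyps F_def by simp
    have d1: "xx m - xx K = 4 * (real m - real K) * (real m + real K - 1)" unfolding xx_diff by simp
    have d2: "xx (Suc m) - xx k = 4 * (real m + 1 - real k) * (real m + real k)" unfolding xx_diff by (simp add: algebra_simps)
    have nz: "real m - real K \<noteq> 0" "real m + real K - 1 \<noteq> 0" "real m + 1 - real k \<noteq> 0" "real m + real k \<noteq> 0"
      "real K - real k \<noteq> 0" "real K + real k - 1 \<noteq> 0" using mK step.hyps m1 assms by auto
    have xp: "xx m \<noteq> 0" "xx (Suc m) \<noteq> 0" using xx_pos[OF m1] xx_pos[of "Suc m"] by auto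
    have "(\<Sum>j\<in>{k..Suc m}. gg j K * ff j k / xx j) = (\<Sum>j\<in>{k..m}. gg j K * ff j k / xx j) + gg (Suc m) K * ff (Suc m) k / xx (Suc m)"
      using step.hyps by (simp add: sum.nat_ivl_Suc')
    also have "\<dots> = gg m K * ff m k / xx m * ((real K - real m)*(real m + real K - 1)/((real K - real k)*(real K + real k - 1)))
        + gg (Suc m) K * ff (Suc m) k / xx (Suc m)" using step.IH mK by simp
    also have "\<dots> = gg (Suc m) K * ff (Suc m) k / xx (Suc m) * ((real K - real (Suc m))*(real (Suc m) + real K - 1)/((real K - real k)*(real K + real k - 1)))"
    proof -
      have Tm: "gg m K * ff m k / xx m = G*F / (xx m - xx K)" unfolding g F_def[symmetric] using xp by simp
      have TS: "gg (Suc m) K * ff (Suc m) k / xx (Suc m) = G*F / (xx (Suc m) - xx k)" unfolding f G_def[symmetric] using xp by simp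
      have key: "((real K - real m)*(real m + real K - 1)/((real K - real k)*(real K + real k - 1))) / (xx m - xx K) + 1/(xx (Suc m) - xx k)
        = ((real K - real (Suc m))*(real (Suc m) + real K - 1)/((real K - real k)*(real K + real k - 1))) / (xx (Suc m) - xx k)"
        unfolding d1 d2 using tsum_key[OF nz] by simp
      define a1 where "a1 = xx m - xx K"
      define a2 where "a2 = xx (Suc m) - xx k"
      define Rm where "Rm = (real K - real m)*(real m + real K - 1)/((real K - real k)*(real K + real k - 1))"
      define RS where "RS = (real K - real (Suc m))*(real (Suc m) + real K - 1)/((real K - real k)*(real K + real k - 1))"
      have key': "Rm / a1 + 1 / a2 = RS / a2" using key unfolding a1_def a2_def Rm_def RS_def .
      have "G*F/a1*Rm + G*F/a2 = G*F*(Rm / a1 + 1 / a2)" by (simp add: ring_distribs)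
      also have "\<dots> = G*F/a2*RS" unfolding key' by simp
      finally show ?thesis unfolding Tm TS a1_def[symmetric] a2_def[symmetric] Rm_def[symmetric] RS_def[symmetric] .
    qed
    finally show "(\<Sum>j\<in>{k..Suc m}. gg j K * ff j k / xx j) = gg (Suc m) K * ff (Suc m) k / xx (Suc m) * ((real K - real (Suc m))*(real (Suc m) + real K - 1)/((real K - real k)*(real K + real k - 1)))" .
  qed
qed

lemma Phi2: assumes "1 \<le> k" "k < K" shows "Phi 2 K k = 0"
proof -
  have "Phi 2 K k = (\<Sum>j\<in>{k..K}. gg j K * ff j k / xx j)" unfolding Phi_def xx_def ..
  also have "\<dots> = 0" using Tsum[OF assms, of K] assms by simp
  finally show ?thesis .
qed


lemma rec_scalar:
  fixes a b q r0 t l :: real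
  assumes "r0 \<noteq> 0" "t \<noteq> 0" "l \<noteq> 0" "- b*q + a * r0 + q * t + r0 * t = 0"
  shows "b^2 * (- a * q / (8*l*r0)) / t + a^2*b/(8*l) / t = b * (- a * q / (8*l*r0)) - a*b/(8*l)"
proof -
  have "b^2 * (- a * q / (8*l*r0)) / t + a^2*b/(8*l) / t - (b * (- a * q / (8*l*r0)) - a*b/(8*l))
      = a*b/(8*l*r0*t) * (- b*q + a * r0 + q * t + r0 * t)"
    using assms(1-3) by (simp add: field_simps power2_eq_square)
  then show ?thesis using assms(4) by simp
qed

lemma Rec:
  assumes "1 \<le> k" "k \<le> L"
  shows "(2*real L+1)^2 * Phi (Suc c) (Suc L) k + (2*real L-1)^2*(2*real L+1)/(8*real L) * Phi (Suc c) L k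
       = (2*real L+1) * Phi c (Suc L) k - (2*real L-1)*(2*real L+1)/(8*real L) * Phi c L k"
proof -
  have L1: "1 \<le> L" using assms by simp
  define \<rho> where "\<rho> m = - (2*real L - 1) * (real m + real L - 1) / (8*real L*(real L + 1 - real m))" for m
  define A where "A m = gg m L * ff m k" for m
  define t where "t m = 2*real m - 1" for m
  have S1: "Phi c' (Suc L) k = (\<Sum>m\<in>{k..L}. A m * \<rho> m / t m ^ c') + ff (Suc L) k / (2*real L + 1)^c'" for c'
  proof -
    have "Phi c' (Suc L) k = (\<Sum>m\<in>{k..L}. gg m (Suc L) * ff m k / (2*real m - 1)^c') + ff (Suc L) k / (2*real L + 1)^c'"
      unfolding Phi_def using assms by (simp add: sum.nat_ivl_Suc' algebra_simps)
    also have "(\<Sum>m\<in>{k..L}. gg m (Suc L) * ff m k / (2*real m - 1)^c') = (\<Sum>m\<in>{k..L}. A m * \<rho> m / t m ^ c')"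
    proof (rule sum.cong[OF refl])
      fix m assume "m \<in> {k..L}"
      then have "1 \<le> m" "m \<le> L" using assms by auto
      then show "gg m (Suc L) * ff m k / (2*real m - 1)^c' = A m * \<rho> m / t m ^ c'"
        unfolding A_def \<rho>_def t_def using gg_ratio by (simp add: mult_ac)
    qed
    finally show ?thesis .
  qed
  have S2: "Phi c' L k = (\<Sum>m\<in>{k..L}. A m / t m ^ c')" for c'
    unfolding Phi_def A_def t_def by simp
  define pL where "pL = 2*real L + 1"
  define mL where "mL = 2*real L - 1"
  define l where "l = real L"
  have l0: "l \<noteq> 0" unfolding l_def using L1 by simp
  have trm: "pL^2 * (A m * \<rho> m / t m ^ Suc c) + mL^2*pL/(8*l) * (A m / t m ^ Suc c)
       = pL * (A m * \<rho> m / t m ^ c) - mL*pL/(8*l) * (A m / t m ^ c)" if m: "m \<in> {k..L}" for m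
  proof -
    have m1: "1 \<le> m" "m \<le> L" using m assms by auto
    have t0: "t m \<noteq> 0" unfolding t_def using m1 by simp
    have s0: "real L + 1 - real m \<noteq> 0" using m1 by simp
    have poly: "- pL*(real m + real L - 1) + mL*(real L + 1 - real m) + (real m + real L - 1)*t m + (real L + 1 - real m)*t m = 0"
      unfolding pL_def mL_def t_def by (simp add: algebra_simps)
    have sc: "pL^2 * (- mL * (real m + real L - 1) / (8*l*(real L + 1 - real m))) / t m + mL^2*pL/(8*l) / t m
        = pL * (- mL * (real m + real L - 1) / (8*l*(real L + 1 - real m))) - mL*pL/(8*l)"
      by (rule rec_scalar[OF s0 t0 l0 poly])
    have rr: "\<rho> m = - mL * (real m + real L - 1) / (8*l*(real L + 1 - real m))"
      unfolding \<rho>_def mL_def l_def by simp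
    have "pL^2 * (A m * \<rho> m / t m ^ Suc c) + mL^2*pL/(8*l) * (A m / t m ^ Suc c)
       = (A m / t m ^ c) * (pL^2 * \<rho> m / t m + mL^2*pL/(8*l) / t m)"
      using t0 l0 by (simp add: field_simps)
    also have "\<dots> = (A m / t m ^ c) * (pL * \<rho> m - mL*pL/(8*l))"
      using sc unfolding rr by simp
    also have "\<dots> = pL * (A m * \<rho> m / t m ^ c) - mL*pL/(8*l) * (A m / t m ^ c)"
      using t0 l0 by (simp add: field_simps)
    finally show ?thesis .
  qed
  have sums: "pL^2 * (\<Sum>m\<in>{k..L}. A m * \<rho> m / t m ^ Suc c) + mL^2*pL/(8*l) * (\<Sum>m\<in>{k..L}. A m / t m ^ Suc c)
      = pL * (\<Sum>m\<in>{k..L}. A m * \<rho> m / t m ^ c) - mL*pL/(8*l) * (\<Sum>m\<in>{k..L}. A m / t m ^ c)"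
    unfolding sum_distrib_left sum.distrib[symmetric] sum_subtractf[symmetric]
    using trm by (rule sum.cong[OF refl])
  have bnd: "pL^2 * (ff (Suc L) k / pL ^ Suc c) = pL * (ff (Suc L) k / pL ^ c)"
  proof -
    have "pL \<noteq> 0" unfolding pL_def by (smt (verit) of_nat_0_le_iff)
    then show ?thesis by (simp add: power2_eq_square field_simps)
  qed
  show ?thesis unfolding S1 S2 unfolding pL_def[symmetric] mL_def[symmetric] distrib_left
    using sums bnd unfolding l_def by linarith
qed


lemma Phi2': "1 \<le> k \<Longrightarrow> k \<le> L \<Longrightarrow> Phi 2 L k = (if L = k then 1/(2*real k - 1)^2 else 0)"
  using Phi2[of k L] Phi_refl[of 2 k] by auto

lemma Phi1:
  assumes "1 \<le> k" "k \<le> K"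
  shows "Phi 1 K k = NN K / NN k * 2^tri K k / (2*real K - 1)"
  using assms(2)
proof (induction K rule: dec_induct)
  case base
  then show ?case using NN_pos[OF assms(1)] by (simp add: Phi_refl tri_def)
next
  case (step L)
  have L1: "1 \<le> L" using step.hyps assms by simp
  define pL where "pL = 2*real L + 1"
  define mL where "mL = 2*real L - 1"
  define l where "l = real L"
  define nL where "nL = NN L"
  define nk where "nk = NN k"
  have nz: "pL \<noteq> 0" "mL \<noteq> 0" "l \<noteq> 0" "nk \<noteq> 0" "nL \<noteq> 0"
    unfolding pL_def mL_def l_def nk_def nL_def using L1 NN_pos[OF assms(1)] NN_pos[OF L1] by auto
  have R: "pL^2 * Phi 2 (Suc L) k + mL^2*pL/(8*l) * Phi 2 L k = pL * Phi 1 (Suc L) k - mL*pL/(8*l) * Phi 1 L k"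
    using Rec[OF assms(1) step.hyps(1), of 1] unfolding pL_def mL_def l_def by (simp add: numeral_2_eq_2)
  have z: "Phi 2 (Suc L) k = 0" using Phi2[of k "Suc L"] assms step.hyps by simp
  have IH: "Phi 1 L k = nL / nk * 2^tri L k / mL" using step.IH unfolding nL_def nk_def mL_def .
  have NS: "NN (Suc L) = nL * pL / (8*l)" unfolding nL_def pL_def l_def using NN_Suc[OF L1] by simp
  have tS: "tri (Suc L) k = 1" using step.hyps unfolding tri_def by simp
  have pS: "2*real (Suc L) - 1 = pL" unfolding pL_def by simp
  have P1: "Phi 1 (Suc L) k = (mL^2 * Phi 2 L k + mL * Phi 1 L k)/(8*l)"
  proof -
    have E: "pL * Phi 1 (Suc L) k = pL * ((mL^2 * Phi 2 L k + mL * Phi 1 L k)/(8*l))"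
      using R z nz by (simp add: field_simps)
    show ?thesis using E mult_left_cancel[OF nz(1)] by blast
  qed
  show ?case
  proof (cases "L = k")
    case True
    then have "Phi 2 L k = 1 / mL^2" "tri L k = 0" "nL = nk" unfolding mL_def tri_def nL_def nk_def
      using Phi2'[OF assms(1), of L] by auto
    then show ?thesis unfolding P1 IH NS tS pS nk_def[symmetric] using nz
      by (simp add: field_simps power2_eq_square)
  next
    case False
    then have "Phi 2 L k = 0" "tri L k = 1" unfolding tri_def
      using Phi2'[OF assms(1), of L] step.hyps by auto
    then show ?thesis unfolding P1 IH NS tS pS nk_def[symmetric] using nz
      by (simp add: field_simps power2_eq_square)
  qed
qed

lemma V0: "Vsharp K k [] = (2*((2*real K - 1)/(2*real k - 1)))^tri K k"
  unfolding Vsharp_def by simp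

lemma Vr: "1 \<le> r \<Longrightarrow> k \<le> K \<Longrightarrow> Vsharp K k (replicate r 1) = (2*real K - 1)/(2*real k - 1) * Vsum K k (replicate r 1)"
  unfolding Vsharp_def by simp

lemma Vsum_cons: "Vsum K k (1 # s) = (\<Sum>l\<in>{k..K}. 2^tri K l * (Vsum l k s / (2*real l - 1)))"
  by simp

lemma Vsum_diag: "Vsum k k (replicate r 1) = 1/(2*real k - 1)^r"
  by (induction r) (simp_all add: tri_def)

lemma Vdiag: "Vsharp k k (replicate r 1) = 1/(2*real k - 1)^r"
proof (cases "r = 0")
  case True then show ?thesis by (simp add: V0 tri_def)
next
  case False
  then have "1 \<le> r" by simp
  then show ?thesis unfolding Vr[OF \<open>1 \<le> r\<close> le_refl] Vsum_diag
    by (cases "2*real k - 1 = 0") auto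
qed

lemma Vnorm:
  assumes "1 \<le> k" "k \<le> l"
  shows "Vsharp l k (replicate r 1) / (2*real l - 1) = Vsum l k (replicate r 1) / (2*real k - 1)"
proof (cases "r = 0")
  case True
  have l0: "2*real l - 1 \<noteq> 0" using assms by simp
  show ?thesis
  proof (cases "l = k")
    case True then show ?thesis using \<open>r = 0\<close> by (simp add: V0 tri_def)
  next
    case False
    have k0: "2*real k - 1 \<noteq> 0" using assms by simp
    define a where "a = 2*real l - 1"
    define c where "c = 2*real k - 1"
    have A: "Vsharp l k [] = 2 * (a/c)" unfolding a_def c_def using False by (simp add: V0 tri_def)
    have B: "Vsum l k [] = 2" using False by (simp add: tri_def)
    have "2 * (a/c) / a = 2 / c" using l0 k0 unfolding a_def c_def[symmetric] by (simp add: field_simps)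
    then show ?thesis unfolding \<open>r = 0\<close> replicate_0 A B a_def[symmetric] c_def[symmetric] by simp
  qed
next
  case False
  then have "1 \<le> r" by simp
  have l0: "2*real l - 1 \<noteq> 0" using assms by simp
  show ?thesis unfolding Vr[OF \<open>1 \<le> r\<close> assms(2)] using l0 by simp
qed

lemma sumdiff:
  assumes "k \<le> L"
  shows "(\<Sum>l\<in>{k..Suc L}. 2^tri (Suc L) l * b l) - (\<Sum>l\<in>{k..L}. 2^tri L l * b l) = b (Suc L) + (b L :: real)"
proof -
  have a: "(\<Sum>l\<in>{k..Suc L}. 2^tri (Suc L) l * b l) = (\<Sum>l\<in>{k..L}. 2 * b l) + b (Suc L)"
    using assms by (simp add: sum.nat_ivl_Suc' tri_def)
  have "(\<Sum>l\<in>{k..L}. 2 * b l) - (\<Sum>l\<in>{k..L}. 2^tri L l * b l) = (\<Sum>l\<in>{k..L}. (if l = L then b l else 0))"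
    unfolding sum_subtractf[symmetric] by (rule sum.cong) (auto simp: tri_def)
  also have "\<dots> = b L" using assms by (simp add: sum.delta')
  finally show ?thesis unfolding a by simp
qed

lemma VR:
  assumes "1 \<le> k" "k \<le> L"
  shows "Vsharp (Suc L) k (replicate (Suc r) 1) / (2*real L + 1) - Vsharp L k (replicate (Suc r) 1) / (2*real L - 1)
       = Vsharp (Suc L) k (replicate r 1) / (2*real L + 1)^2 + Vsharp L k (replicate r 1) / (2*real L - 1)^2"
proof -
  define b where "b l = Vsum l k (replicate r 1) / (2*real l - 1)" for l
  have k0: "2*real k - 1 \<noteq> 0" using assms by simp
  have e1: "Vsharp (Suc L) k (replicate (Suc r) 1) / (2*real L + 1) = Vsum (Suc L) k (replicate (Suc r) 1) / (2*real k - 1)"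
    using Vnorm[OF assms(1), of "Suc L" "Suc r"] assms by (simp add: algebra_simps)
  have e2: "Vsharp L k (replicate (Suc r) 1) / (2*real L - 1) = Vsum L k (replicate (Suc r) 1) / (2*real k - 1)"
    using Vnorm[OF assms(1) assms(2), of "Suc r"] by simp
  have e3: "Vsharp l k (replicate r 1) / (2*real l - 1)^2 = b l / (2*real k - 1)" if "k \<le> l" for l
  proof -
    define a where "a = 2*real l - 1"
    define c where "c = 2*real k - 1"
    define X where "X = Vsharp l k (replicate r 1)"
    define Y where "Y = Vsum l k (replicate r 1)"
    have v: "X/a = Y/c" using Vnorm[OF assms(1) that, of r] unfolding a_def c_def X_def Y_def .
    have "X/a^2 = (X/a)/a" by (simp add: power2_eq_square)
    also have "\<dots> = (Y/c)/a" using v by simp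
    also have "\<dots> = (Y/a)/c" by (simp add: divide_divide_eq_left mult.commute)
    finally show ?thesis unfolding b_def a_def c_def X_def Y_def .
  qed
  have e4: "Vsum K k (replicate (Suc r) 1) = (\<Sum>l\<in>{k..K}. 2^tri K l * b l)" for K
    unfolding b_def by simp
  define VS where "VS = Vsum (Suc L) k (replicate (Suc r) 1)"
  define VL where "VL = Vsum L k (replicate (Suc r) 1)"
  define c where "c = 2*real k - 1"
  have d: "VS - VL = b (Suc L) + b L"
    unfolding VS_def VL_def e4 using sumdiff[OF assms(2)] .
  have m1: "Vsharp (Suc L) k (replicate r 1) / (2*real L + 1)^2 = b (Suc L) / c"
    using e3[of "Suc L"] assms unfolding c_def by (simp add: add.commute)
  have m2: "Vsharp L k (replicate r 1) / (2*real L - 1)^2 = b L / c"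
    using e3[of L] assms unfolding c_def by simp
  have "VS / c - VL / c = b (Suc L) / c + b L / c"
    by (metis d diff_divide_distrib add_divide_distrib)
  then show ?thesis unfolding e1 e2 m1 m2 VS_def[symmetric] VL_def[symmetric] c_def[symmetric] .
qed

lemma gg1: "1 \<le> K \<Longrightarrow> gg 1 K = NN K * (-2) * (-1)^K / (2*real K - 1)"
proof (induction K rule: dec_induct)
  case base
  then show ?case by (simp add: NN_def)
next
  case (step L)
  have L1: "1 \<le> L" using step.hyps by simp
  have "gg 1 (Suc L) = gg 1 L * (- (2*real L - 1) / (8*real L))"
    using gg_ratio[of 1 L] L1 by simp
  also have "\<dots> = NN (Suc L) * (-2) * (-1)^(Suc L) / (2*real (Suc L) - 1)"
  proof -
    define pL where "pL = 2*real L + 1"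
    define mL where "mL = 2*real L - 1"
    define l where "l = real L"
    have nz: "pL \<noteq> 0" "mL \<noteq> 0" "l \<noteq> 0" unfolding pL_def mL_def l_def using L1 by auto
    have NS: "NN (Suc L) = NN L * pL / (8*l)" unfolding pL_def l_def using NN_Suc[OF L1] by simp
    have pS: "2*real (Suc L) - 1 = pL" unfolding pL_def by simp
    have "NN L * (-2) * (-1)^L / mL * (- mL/(8*l)) = (NN L * pL/(8*l)) * (-2)*(-1)^Suc L / pL"
      using nz by (simp add: field_simps)
    then show ?thesis unfolding step.IH NS pS unfolding mL_def l_def by simp
  qed
  finally show ?case .
qed


definition Cd :: "nat \<Rightarrow> nat \<Rightarrow> nat \<Rightarrow> real" where
  "Cd r K k = NN K / NN k * (-1)^(K-k) * Vsharp K k (replicate r 1) / (2*real K - 1)^3"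

lemma solveRec:
  assumes "1 \<le> k" "k \<le> L"
  shows "Phi (Suc c) (Suc L) k = ((2*real L+1) * Phi c (Suc L) k - (2*real L-1)*(2*real L+1)/(8*real L) * Phi c L k
        - (2*real L-1)^2*(2*real L+1)/(8*real L) * Phi (Suc c) L k) / (2*real L+1)^2"
proof -
  define pL where "pL = 2*real L + 1"
  have p0: "pL \<noteq> 0" unfolding pL_def by (smt (verit) of_nat_0_le_iff)
  have R: "pL^2 * Phi (Suc c) (Suc L) k + (2*real L-1)^2*pL/(8*real L) * Phi (Suc c) L k
       = pL * Phi c (Suc L) k - (2*real L-1)*pL/(8*real L) * Phi c L k"
    using Rec[OF assms] unfolding pL_def .
  show ?thesis unfolding pL_def[symmetric] using R p0 by (simp add: field_simps)
qed

lemma Cd_diag: "Cd r k k = 1 / (2*real k - 1)^(r+3)" if "1 \<le> k"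
  unfolding Cd_def Vdiag using NN_pos[OF that] by (simp add: power_add field_simps)

lemma PhiC:
  assumes "1 \<le> k"
  shows "k \<le> K \<Longrightarrow> Phi (r+3) K k = Cd r K k"
proof (induction r arbitrary: K)
  case 0
  show ?case using 0
  proof (induction K rule: dec_induct)
    case base
    then show ?case using Cd_diag[OF assms, of 0] Phi_refl[of 3 k] by simp
  next
    case (step L)
    have L1: "1 \<le> L" using step.hyps assms by simp
    define pL where "pL = 2*real L + 1"
    define mL where "mL = 2*real L - 1"
    define l where "l = real L"
    define nL where "nL = NN L"
    define nk where "nk = NN k"
    define c where "c = 2*real k - 1"
    define e where "e = ((-1)::real)^(L-k)"
    have nz: "pL \<noteq> 0" "mL \<noteq> 0" "l \<noteq> 0" "nk \<noteq> 0" "nL \<noteq> 0" "c \<noteq> 0"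
      unfolding pL_def mL_def l_def nk_def nL_def c_def using L1 assms NN_pos[OF assms] NN_pos[OF L1] by auto
    have X: "Phi (0+3) (Suc L) k = (pL * Phi 2 (Suc L) k - mL*pL/(8*l) * Phi 2 L k - mL^2*pL/(8*l) * Phi 3 L k) / pL^2"
      using solveRec[OF assms step.hyps(1), of 2] unfolding pL_def mL_def l_def by (simp add: numeral_3_eq_3)
    have z: "Phi 2 (Suc L) k = 0" using Phi2[of k "Suc L"] assms step.hyps by simp
    have NS: "NN (Suc L) = nL * pL / (8*l)" unfolding nL_def pL_def l_def using NN_Suc[OF L1] by simp
    have eS: "((-1)::real)^(Suc L - k) = - e" unfolding e_def using step.hyps by (simp add: Suc_diff_le)
    have pS: "2*real (Suc L) - 1 = pL" unfolding pL_def by simp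
    have triS: "tri (Suc L) k = 1" using step.hyps by (simp add: tri_def)
    have CS: "Cd 0 (Suc L) k = nL * pL / (8*l) / nk * (- e) * (2 * (pL / c)) / pL^3"
      unfolding Cd_def NS eS pS V0 replicate_0 triS nk_def[symmetric] c_def[symmetric] by simp
    have IH: "Phi 3 L k = Cd 0 L k" using step.IH by simp
    show ?case
    proof (cases "L = k")
      case True
      have a: "Phi 2 L k = 1/mL^2" "Cd 0 L k = 1/mL^3" "nL = nk" "e = 1" "c = mL"
        using True Phi_refl[of 2 k] Cd_diag[OF assms, of 0]
        unfolding mL_def nL_def nk_def e_def c_def by auto
      show ?thesis unfolding X z IH CS a using nz by (simp add: field_simps power2_eq_square power3_eq_cube)
    next
      case False
      have a: "Phi 2 L k = 0" using Phi2[of k L] False step.hyps assms by simp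
      have b: "Cd 0 L k = nL / nk * e * (2 * (mL / c)) / mL^3"
        using False step.hyps unfolding Cd_def V0 replicate_0 nL_def nk_def e_def mL_def c_def
        by (simp add: tri_def)
      show ?thesis unfolding X z IH CS a b using nz by (simp add: field_simps power2_eq_square power3_eq_cube)
    qed
  qed
next
  case (Suc r)
  show ?case using Suc.prems
  proof (induction K rule: dec_induct)
    case base
    then show ?case using Cd_diag[OF assms, of "Suc r"] Phi_refl[of "Suc r + 3" k] by simp
  next
    case (step L)
    have L1: "1 \<le> L" using step.hyps assms by simp
    define pL where "pL = 2*real L + 1"
    define mL where "mL = 2*real L - 1"
    define l where "l = real L"
    define nL where "nL = NN L"
    define nk where "nk = NN k"
    define e where "e = ((-1)::real)^(L-k)"
    define VrS where "VrS = Vsharp (Suc L) k (replicate r 1)"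
    define VrL where "VrL = Vsharp L k (replicate r 1)"
    define V1S where "V1S = Vsharp (Suc L) k (replicate (Suc r) 1)"
    define V1L where "V1L = Vsharp L k (replicate (Suc r) 1)"
    have nz: "pL \<noteq> 0" "mL \<noteq> 0" "l \<noteq> 0" "nk \<noteq> 0" "nL \<noteq> 0"
      unfolding pL_def mL_def l_def nk_def nL_def using L1 assms NN_pos[OF assms] NN_pos[OF L1] by auto
    have X: "Phi (Suc r + 3) (Suc L) k = (pL * Phi (r+3) (Suc L) k - mL*pL/(8*l) * Phi (r+3) L k - mL^2*pL/(8*l) * Phi (Suc r + 3) L k) / pL^2"
      using solveRec[OF assms step.hyps(1), of "r+3"] unfolding pL_def mL_def l_def by simp
    have NS: "NN (Suc L) = nL * pL / (8*l)" unfolding nL_def pL_def l_def using NN_Suc[OF L1] by simp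
    have eS: "((-1)::real)^(Suc L - k) = - e" unfolding e_def using step.hyps by (simp add: Suc_diff_le)
    have pS: "2*real (Suc L) - 1 = pL" unfolding pL_def by simp
    have c1: "Phi (r+3) (Suc L) k = nL * pL / (8*l) / nk * (- e) * VrS / pL^3"
      using Suc.IH[of "Suc L"] step.hyps unfolding Cd_def NS eS pS nk_def[symmetric] VrS_def by simp
    have c2: "Phi (r+3) L k = nL / nk * e * VrL / mL^3"
      using Suc.IH[of L] step.hyps unfolding Cd_def nL_def nk_def e_def VrL_def mL_def by simp
    have c3: "Phi (Suc r + 3) L k = nL / nk * e * V1L / mL^3"
      using step.IH unfolding Cd_def nL_def nk_def e_def V1L_def mL_def by simp
    have CS: "Cd (Suc r) (Suc L) k = nL * pL / (8*l) / nk * (- e) * V1S / pL^3"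
      unfolding Cd_def NS eS pS nk_def[symmetric] V1S_def by simp
    have VRi: "V1S / pL - V1L / mL = VrS / pL^2 + VrL / mL^2"
      using VR[OF assms step.hyps(1), of r] unfolding V1S_def V1L_def VrS_def VrL_def pL_def mL_def .
    define K0 where "K0 = nL * pL / (8*l*nk) * (- e)"
    have "pL^2 * Phi (Suc r + 3) (Suc L) k = K0 * (VrS / pL^2 + VrL / mL^2 + V1L / mL)"
      unfolding X c1 c2 c3 K0_def using nz by (simp add: field_simps power2_eq_square power3_eq_cube)
    also have "VrS / pL^2 + VrL / mL^2 + V1L / mL = V1S / pL" using VRi by simp
    also have "K0 * (V1S / pL) = pL^2 * Cd (Suc r) (Suc L) k"
      unfolding CS K0_def using nz by (simp add: field_simps power2_eq_square power3_eq_cube)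
    finally show ?case using nz by simp
  qed
qed


fun hh :: "nat \<Rightarrow> nat \<Rightarrow> nat \<Rightarrow> real" where
  "hh 0 lo hi = 1"
| "hh (Suc a) lo hi = (\<Sum>k\<in>{lo..hi}. hh a lo k / xx k)"

lemma hh_nonneg: "1 \<le> lo \<Longrightarrow> hh a lo hi \<ge> 0"
proof (induction a arbitrary: hi)
  case 0 then show ?case by simp
next
  case (Suc a)
  have "\<And>k. k \<in> {lo..hi} \<Longrightarrow> hh a lo k / xx k \<ge> 0"
    using Suc xx_pos by (metis atLeastAtMost_iff divide_nonneg_pos le_trans less_le_trans zero_less_one)
  then show ?case by (auto intro: sum_nonneg)
qed

lemma tri_swap:
  fixes lo M :: nat
  shows "(\<Sum>k\<in>{lo..M}. \<Sum>m\<in>{lo..k}. f k m) = (\<Sum>m\<in>{lo..M}. \<Sum>k\<in>{m..M}. (f k m :: 'a::comm_monoid_add))"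
proof (induction M)
  case 0
  then show ?case by (cases "lo = 0") auto
next
  case (Suc M)
  show ?case
  proof (cases "lo \<le> Suc M")
    case False then show ?thesis by simp
  next
    case True
    have "(\<Sum>m\<in>{lo..Suc M}. \<Sum>k\<in>{m..Suc M}. f k m) =
          (\<Sum>m\<in>{lo..M}. \<Sum>k\<in>{m..Suc M}. f k m) + f (Suc M) (Suc M)"
      using True by (simp add: sum.nat_ivl_Suc')
    also have "(\<Sum>m\<in>{lo..M}. \<Sum>k\<in>{m..Suc M}. f k m) = (\<Sum>m\<in>{lo..M}. (\<Sum>k\<in>{m..M}. f k m) + f (Suc M) m)"
      by (rule sum.cong) (auto simp: sum.nat_ivl_Suc' add.commute)
    also have "\<dots> = (\<Sum>m\<in>{lo..M}. \<Sum>k\<in>{m..M}. f k m) + (\<Sum>m\<in>{lo..M}. f (Suc M) m)"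
      by (simp add: sum.distrib)
    finally have r: "(\<Sum>m\<in>{lo..Suc M}. \<Sum>k\<in>{m..Suc M}. f k m) =
       (\<Sum>m\<in>{lo..M}. \<Sum>k\<in>{m..M}. f k m) + ((\<Sum>m\<in>{lo..M}. f (Suc M) m) + f (Suc M) (Suc M))"
      by (simp add: add.assoc)
    have l: "(\<Sum>k\<in>{lo..Suc M}. \<Sum>m\<in>{lo..k}. f k m) = (\<Sum>k\<in>{lo..M}. \<Sum>m\<in>{lo..k}. f k m) + (\<Sum>m\<in>{lo..Suc M}. f (Suc M) m)"
      using True by (simp add: sum.nat_ivl_Suc' add.commute)
    have l2: "(\<Sum>m\<in>{lo..Suc M}. f (Suc M) m) = (\<Sum>m\<in>{lo..M}. f (Suc M) m) + f (Suc M) (Suc M)"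
      using True by (simp add: sum.nat_ivl_Suc' add.commute)
    show ?thesis unfolding l l2 r Suc.IH ..
  qed
qed

lemma T1: "tstar M (replicate a 2 @ (cc # s)) = (\<Sum>m\<in>{1..M}. hh a m M * tstar m s / (2*real m - 1)^cc)"
proof (induction a arbitrary: M)
  case 0
  then show ?case by simp
next
  case (Suc a)
  have "tstar M (replicate (Suc a) 2 @ (cc # s)) = (\<Sum>k\<in>{1..M}. tstar k (replicate a 2 @ (cc # s)) / xx k)"
    by (simp add: xx_def)
  also have "\<dots> = (\<Sum>k\<in>{1..M}. \<Sum>m\<in>{1..k}. hh a m k / xx k * (tstar m s / (2*real m - 1)^cc))"
    unfolding Suc.IH by (simp add: sum_divide_distrib mult.commute)
  also have "\<dots> = (\<Sum>m\<in>{1..M}. \<Sum>k\<in>{m..M}. hh a m k / xx k * (tstar m s / (2*real m - 1)^cc))"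
    by (rule tri_swap)
  also have "\<dots> = (\<Sum>m\<in>{1..M}. (\<Sum>k\<in>{m..M}. hh a m k / xx k) * (tstar m s / (2*real m - 1)^cc))"
    by (simp only: sum_distrib_right)
  also have "\<dots> = (\<Sum>m\<in>{1..M}. hh (Suc a) m M * tstar m s / (2*real m - 1)^cc)"
    by simp
  finally show ?case .
qed

lemma T2: "tstar M (replicate a 2) = hh a 1 M"
proof (induction a arbitrary: M)
  case 0 then show ?case by simp
next
  case (Suc a) then show ?case by (simp add: xx_def)
qed

lemma hh_rec: "lo \<le> Suc hi \<Longrightarrow> hh (Suc b) lo (Suc hi) = hh (Suc b) lo hi + hh b lo (Suc hi) / xx (Suc hi)"
  by (simp add: sum.nat_ivl_Suc' add.commute)

lemma hh_conv: "lo \<le> Suc hi \<Longrightarrow> hh b lo (Suc hi) = (\<Sum>i\<le>b. hh i lo hi * (1 / xx (Suc hi))^(b-i))"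
proof (induction b)
  case 0 then show ?case by simp
next
  case (Suc b)
  have "hh (Suc b) lo (Suc hi) = hh (Suc b) lo hi + (1 / xx (Suc hi)) * (\<Sum>i\<le>b. hh i lo hi * (1 / xx (Suc hi))^(b-i))"
    using hh_rec[OF Suc.prems] Suc by simp
  also have "(1 / xx (Suc hi)) * (\<Sum>i\<le>b. hh i lo hi * (1 / xx (Suc hi))^(b-i)) = (\<Sum>i\<le>b. hh i lo hi * (1 / xx (Suc hi))^(Suc b-i))"
    unfolding sum_distrib_left by (rule sum.cong) (auto simp: Suc_diff_le)
  finally show ?case by (simp add: add.commute)
qed

lemma hh_empty: "hi < lo \<Longrightarrow> hh b lo hi = (if b = 0 then 1 else 0)"
  by (cases b) auto

lemma single_sum: "summable (\<lambda>b. norm (if b = (0::nat) then 1 else (0::complex))) \<and> (\<lambda>b. if b = 0 then 1 else (0::complex)) sums 1"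
proof
  have "(\<lambda>b. norm (if b = (0::nat) then 1 else (0::complex))) = (\<lambda>b. if b = 0 then 1 else 0)" by auto
  then show "summable (\<lambda>b. norm (if b = (0::nat) then 1 else (0::complex)))"
    using sums_single[of 0 "\<lambda>_. 1::real"] sums_summable by fastforce
  show "(\<lambda>b. if b = 0 then 1 else (0::complex)) sums 1" using sums_single[of 0 "\<lambda>_. 1::complex"] by simp
qed

lemma H_sums:
  fixes w :: complex
  assumes "1 \<le> lo" "norm w < 1"
  shows "summable (\<lambda>b. norm (of_real (hh b lo hi) * w^b)) \<and> (\<lambda>b. of_real (hh b lo hi) * w^b) sums Blk w hi lo"
proof (induction hi)
  case 0
  have e: "\<And>b. of_real (hh b lo 0) * w^b = (if b = 0 then 1 else (0::complex))"
    using assms hh_empty[of 0 lo] by auto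
  have B: "Blk w 0 lo = 1" unfolding Blk_def using assms by simp
  show ?case unfolding e B by (rule single_sum)
next
  case (Suc hi)
  show ?case
  proof (cases "lo \<le> Suc hi")
    case False
    have e: "\<And>b. of_real (hh b lo (Suc hi)) * w^b = (if b = 0 then 1 else (0::complex))"
      using False hh_empty[of "Suc hi" lo] by auto
    have B: "Blk w (Suc hi) lo = 1" unfolding Blk_def using False by simp
    show ?thesis unfolding e B by (rule single_sum)
  next
    case True
    define q where "q = 1 / xx (Suc hi)"
    have x1: "xx (Suc hi) \<ge> 1" using xx_pos[of "Suc hi"] by simp
    have q0: "0 < q" "q \<le> 1" unfolding q_def using x1 by auto
    define a where "a b = of_real (hh b lo hi) * w^b" for b
    define g where "g n = (of_real q * w)^n" for n
    have na: "summable (\<lambda>b. norm (a b))" using Suc unfolding a_def by simp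
    have sa: "a sums Blk w hi lo" using Suc unfolding a_def by simp
    have nqw: "norm (of_real q * w) < 1"
    proof -
      have "norm (of_real q * w) = q * norm w" using q0 by (simp add: norm_mult)
      also have "\<dots> \<le> norm w" using q0 by (simp add: mult_left_le_one_le)
      finally show ?thesis using assms(2) by simp
    qed
    have ng: "summable (\<lambda>n. norm (g n))" unfolding g_def norm_power
      using nqw by (intro summable_geometric) simp
    have sg: "g sums (1 / (1 - of_real q * w))" unfolding g_def using geometric_sums[OF nqw] .
    have conv: "of_real (hh b lo (Suc hi)) * w^b = (\<Sum>i\<le>b. a i * g (b - i))" for b
    proof -
      have "of_real (hh b lo (Suc hi)) * w^b = (\<Sum>i\<le>b. of_real (hh i lo hi) * of_real q^(b-i) * w^b)"
        unfolding hh_conv[OF True] q_def[symmetric] of_real_sum sum_distrib_right by simp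
      also have "\<dots> = (\<Sum>i\<le>b. a i * g (b - i))"
        unfolding a_def g_def
      proof (rule sum.cong[OF refl])
        fix i assume "i \<in> {..b}"
        then have wb: "w^b = w^i * w^(b-i)" by (simp add: power_add[symmetric])
        show "of_real (hh i lo hi) * of_real q^(b-i) * w^b = of_real (hh i lo hi) * w^i * (of_real q * w)^(b-i)"
          unfolding wb power_mult_distrib by (simp only: mult_ac)
      qed
      finally show ?thesis .
    qed
    have S: "(\<lambda>b. \<Sum>i\<le>b. a i * g (b - i)) sums (suminf a * suminf g)"
      by (rule Cauchy_product_sums[OF na ng])
    have val: "suminf a * suminf g = Blk w (Suc hi) lo"
    proof -
      have "suminf a = Blk w hi lo" using sa sums_unique by metis
      moreover have "suminf g = 1 / (1 - of_real q * w)" using sg sums_unique by metis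
      moreover have "1 / (1 - of_real q * w) = of_real (xx (Suc hi)) / (of_real (xx (Suc hi)) - w)"
      proof -
        define X where "X = (of_real (xx (Suc hi)) :: complex)"
        have X0: "X \<noteq> 0" unfolding X_def using x1 by auto
        have Xw: "X - w \<noteq> 0"
        proof
          assume "X - w = 0"
          then have "norm w = xx (Suc hi)" unfolding X_def using x1 by auto
          then show False using x1 assms(2) by simp
        qed
        have qX: "of_real q = 1 / X" unfolding q_def X_def by simp
        have "1 / (1 - 1 / X * w) = X / (X - w)" using X0 Xw by (simp add: field_simps)
        then show ?thesis unfolding qX X_def .
      qed
      ultimately show ?thesis using Blk_Suc[OF True, of w] by simp
    qed
    have normconv: "norm (of_real (hh b lo (Suc hi)) * w^b) = (\<Sum>i\<le>b. norm (a i) * norm (g (b - i)))" for b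
    proof -
      have "norm (of_real (hh b lo (Suc hi)) * w^b) = hh b lo (Suc hi) * norm w ^ b"
        using hh_nonneg[OF assms(1)] by (simp add: norm_mult norm_power)
      also have "\<dots> = (\<Sum>i\<le>b. hh i lo hi * q^(b-i) * norm w ^ b)"
        unfolding hh_conv[OF True] q_def[symmetric] sum_distrib_right by simp
      also have "\<dots> = (\<Sum>i\<le>b. norm (a i) * norm (g (b - i)))"
        unfolding a_def g_def
      proof (rule sum.cong[OF refl])
        fix i assume "i \<in> {..b}"
        then have wb: "norm w^b = norm w^i * norm w^(b-i)" by (simp add: power_add[symmetric])
        have n1: "norm (of_real (hh i lo hi) * w^i) = hh i lo hi * norm w^i"
          using hh_nonneg[OF assms(1)] by (simp add: norm_mult norm_power)
        have n2: "norm ((of_real q * w)^(b-i)) = q^(b-i) * norm w^(b-i)"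
          using q0 by (simp add: norm_mult norm_power power_mult_distrib)
        show "hh i lo hi * q^(b-i) * norm w ^ b = norm (of_real (hh i lo hi) * w^i) * norm ((of_real q * w)^(b-i))"
          unfolding n1 n2 wb by (simp only: mult_ac)
      qed
      finally show ?thesis .
    qed
    have na': "summable (\<lambda>k. norm (norm (a k)))" using na by simp
    have ng': "summable (\<lambda>k. norm (norm (g k)))" using ng by simp
    have "summable (\<lambda>b. \<Sum>i\<le>b. norm (a i) * norm (g (b - i)))"
      by (rule sums_summable[OF Cauchy_product_sums[OF na' ng']])
    then show ?thesis unfolding normconv unfolding conv using S val by simp
  qed
qed

lemma H_has_sum:
  fixes w :: complex
  assumes "1 \<le> lo" "norm w < 1"
  shows "((\<lambda>b. of_real (hh b lo hi) * w^b) has_sum Blk w hi lo) UNIV"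
  using H_sums[OF assms] by (intro norm_summable_imp_has_sum) auto


lemma has_sum_prod_Sigma:
  fixes f :: "'a \<Rightarrow> complex" and g :: "'b \<Rightarrow> complex"
  assumes f: "(f has_sum F) A" and g: "(g has_sum G) B"
  shows "((\<lambda>(x,y). f x * g y) has_sum (F*G)) (A \<times> B)"
proof -
  have fa: "(\<lambda>x. norm (f x)) summable_on A"
    using has_sum_imp_summable[OF f] summable_on_iff_abs_summable_on_complex by blast
  have ga: "(\<lambda>x. norm (g x)) summable_on B"
    using has_sum_imp_summable[OF g] summable_on_iff_abs_summable_on_complex by blast
  have "(\<lambda>p. norm ((\<lambda>(x,y). f x * g y) p)) summable_on Sigma A (\<lambda>_. B)"
  proof (subst Infinite_Sum.abs_summable_on_Sigma_iff, intro conjI ballI)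
    fix x assume "x \<in> A"
    show "(\<lambda>y. norm ((\<lambda>(x,y). f x * g y) (x, y))) summable_on B"
      using summable_on_cmult_right[OF ga, of "norm (f x)"] by (simp add: norm_mult)
  next
    have e: "(\<Sum>\<^sub>\<infinity>y\<in>B. norm ((\<lambda>(x,y). f x * g y) (x, y))) = norm (f x) * (\<Sum>\<^sub>\<infinity>y\<in>B. norm (g y))" for x
      by (simp add: norm_mult infsum_cmult_right')
    show "(\<lambda>x. norm (\<Sum>\<^sub>\<infinity>y\<in>B. norm ((\<lambda>(x,y). f x * g y) (x, y)))) summable_on A"
      unfolding e using summable_on_cmult_left[OF fa, of "norm (\<Sum>\<^sub>\<infinity>y\<in>B. norm (g y))"]
      by (simp add: norm_mult abs_mult)
  qed
  then have s: "(\<lambda>(x,y). f x * g y) summable_on Sigma A (\<lambda>_. B)"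
    using summable_on_iff_abs_summable_on_complex by blast
  have "((\<lambda>(x,y). f x * g y) has_sum (F*G)) (Sigma A (\<lambda>_. B))"
  proof (rule has_sum_SigmaI[where g = "\<lambda>x. f x * G"])
    show "((\<lambda>y. (\<lambda>(x,y). f x * g y) (x, y)) has_sum f x * G) B" if "x \<in> A" for x
      using has_sum_cmult_right[OF g, of "f x"] by simp
    show "((\<lambda>x. f x * G) has_sum F * G) A" using has_sum_cmult_left[OF f] .
    show "(\<lambda>(x,y). f x * g y) summable_on Sigma A (\<lambda>_. B)" using s .
  qed
  then show ?thesis by simp
qed

lemma has_sum_finite_sum:
  fixes f :: "'i \<Rightarrow> 'a \<Rightarrow> complex"
  assumes "finite S" "\<And>m. m \<in> S \<Longrightarrow> (f m has_sum a m) A"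
  shows "((\<lambda>x. \<Sum>m\<in>S. f m x) has_sum (\<Sum>m\<in>S. a m)) A"
  using assms
proof (induction S rule: finite_induct)
  case empty then show ?case by (simp add: has_sum_0)
next
  case (insert m S)
  then show ?case by (simp add: has_sum_add)
qed

fun sidx :: "(nat \<Rightarrow> nat) \<Rightarrow> nat \<Rightarrow> nat list \<Rightarrow> nat list" where
  "sidx c j [] = []"
| "sidx c j [b] = replicate b 2"
| "sidx c j (b # b' # bs) = replicate b 2 @ c (Suc j) # sidx c (Suc j) (b' # bs)"

lemma sidx_gen:
  "length a = Suc r \<Longrightarrow> replicate (a!0) 2 @ concat (map (\<lambda>i. c (j+i) # replicate (a!i) 2) [1..<Suc r]) = sidx c j a"
proof (induction r arbitrary: a j)
  case 0
  then obtain b where "a = [b]" by (metis length_0_conv length_Suc_conv)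
  then show ?case by simp
next
  case (Suc r)
  then obtain b a' where a: "a = b # a'" "length a' = Suc r" by (metis length_Suc_conv)
  then obtain b' a'' where a': "a' = b' # a''" by (metis length_Suc_conv)
  have u: "[1..<Suc (Suc r)] = 1 # map Suc [1..<Suc r]"
    by (simp add: upt_conv_Cons map_Suc_upt)
  have "concat (map (\<lambda>i. c (j+i) # replicate (a!i) 2) [1..<Suc (Suc r)])
      = c (Suc j) # replicate (a'!0) 2 @ concat (map (\<lambda>i. c (Suc j + i) # replicate (a'!i) 2) [1..<Suc r])"
    unfolding u using a by (simp add: comp_def del: upt_Suc)
  also have "\<dots> = c (Suc j) # sidx c (Suc j) a'"
  proof -
    have ih: "replicate (a'!0) 2 @ concat (map (\<lambda>i. c (Suc j + i) # replicate (a'!i) 2) [1..<Suc r]) = sidx c (Suc j) a'"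
      by (rule Suc.IH[OF a(2)])
    show ?thesis unfolding ih ..
  qed
  finally show ?case using a a' by simp
qed

lemma tidx_sidx: "length a = Suc d \<Longrightarrow> tidx d c a = sidx c 0 a"
  unfolding tidx_def using sidx_gen[of a d c 0] by simp

fun swt :: "(nat \<Rightarrow> complex) \<Rightarrow> nat \<Rightarrow> nat list \<Rightarrow> complex" where
  "swt z j [] = 1"
| "swt z j (b # bs) = z j ^ (2*b) * swt z (Suc j) bs"

lemma swt_prod: "swt z j a = (\<Prod>i<length a. z (j+i) ^ (2*(a!i)))"
proof (induction a arbitrary: j)
  case Nil then show ?case by simp
next
  case (Cons b a)
  then show ?case by (simp del: prod.lessThan_Suc add: prod.lessThan_Suc_shift)
qed

fun Lf :: "(nat \<Rightarrow> nat) \<Rightarrow> (nat \<Rightarrow> complex) \<Rightarrow> nat \<Rightarrow> nat \<Rightarrow> nat \<Rightarrow> complex" where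
  "Lf c z j 0 M = Blk (z j ^ 2) M 1"
| "Lf c z j (Suc r) M = (\<Sum>m\<in>{1..M}. Blk (z j ^ 2) M m * of_real (1/(2*real m - 1)^(c (Suc j))) * Lf c z (Suc j) r m)"

lemma GF:
  assumes "\<forall>i. j \<le> i \<and> i \<le> j + r \<longrightarrow> norm (z i) < 1"
  shows "((\<lambda>bs. of_real (tstar M (sidx c j bs)) * swt z j bs) has_sum Lf c z j r M) {bs. length bs = Suc r}"
  using assms
proof (induction r arbitrary: j M)
  case 0
  have nz: "norm (z j ^ 2) < 1" using 0 by (simp add: norm_power power_less_one_iff)
  have im: "{bs. length bs = Suc 0} = (\<lambda>b. [b]) ` UNIV"
    by (auto simp: length_Suc_conv)
  have inj: "inj_on (\<lambda>b. [b]) UNIV" by (simp add: inj_on_def)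
  have e: "((\<lambda>bs. of_real (tstar M (sidx c j bs)) * swt z j bs) \<circ> (\<lambda>b. [b])) = (\<lambda>b. of_real (hh b 1 M) * (z j ^ 2)^b)"
    by (auto simp: T2 power_mult)
  show ?case unfolding im has_sum_reindex[OF inj] e Lf.simps
    by (rule H_has_sum[OF le_refl nz])
next
  case (Suc r)
  have nz: "norm (z j ^ 2) < 1" using Suc.prems by (simp add: norm_power power_less_one_iff)
  have IH: "((\<lambda>bs. of_real (tstar m (sidx c (Suc j) bs)) * swt z (Suc j) bs) has_sum Lf c z (Suc j) r m) {bs. length bs = Suc r}" for m
    using Suc.IH[of "Suc j"] Suc.prems by simp
  have im: "{bs. length bs = Suc (Suc r)} = (\<lambda>(b,bs). b # bs) ` (UNIV \<times> {bs. length bs = Suc r})"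
    by (auto simp: length_Suc_conv)
  have inj: "inj_on (\<lambda>(b,bs). b # bs) (UNIV \<times> {bs. length bs = Suc r})" by (simp add: inj_on_def)
  define F where "F m b = of_real (hh b m M) * (z j ^ 2)^b" for m b
  define G where "G m bs = of_real (1/(2*real m - 1)^(c (Suc j))) * (of_real (tstar m (sidx c (Suc j) bs)) * swt z (Suc j) bs)" for m bs
  have pt: "((\<lambda>bs. of_real (tstar M (sidx c j bs)) * swt z j bs) \<circ> (\<lambda>(b,bs). b # bs)) p
      = (\<Sum>m\<in>{1..M}. (\<lambda>(b,bs). F m b * G m bs) p)" if "p \<in> UNIV \<times> {bs. length bs = Suc r}" for p
  proof -
    obtain b bs where p: "p = (b, bs)" by (cases p)
    have lbs: "length bs = Suc r" using that p by simp
    then obtain b' bs' where bs: "bs = b' # bs'" using lbs by (metis length_Suc_conv)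
    have "tstar M (sidx c j (b # bs)) = (\<Sum>m\<in>{1..M}. hh b m M * tstar m (sidx c (Suc j) bs) / (2*real m - 1)^(c (Suc j)))"
      unfolding bs by (simp add: T1)
    then have ts: "of_real (tstar M (sidx c j (b # bs))) = (\<Sum>m\<in>{1..M}. of_real (hh b m M * tstar m (sidx c (Suc j) bs) / (2*real m - 1)^(c (Suc j))) :: complex)"
      by (simp only: of_real_sum)
    have zz: "z j ^ (2*b) = (z j^2)^b" by (simp add: power_mult)
    show ?thesis unfolding p F_def G_def comp_def split swt.simps ts zz sum_distrib_right
    proof (rule sum.cong[OF refl])
      fix m assume "m \<in> {1..M}"
      show "of_real (hh b m M * tstar m (sidx c (Suc j) bs) / (2*real m - 1)^(c (Suc j))) * ((z j^2)^b * swt z (Suc j) bs)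
          = of_real (hh b m M) * (z j ^ 2)^b * (of_real (1/(2*real m - 1)^(c (Suc j))) * (of_real (tstar m (sidx c (Suc j) bs)) * swt z (Suc j) bs))"
        by (simp only: of_real_mult of_real_divide of_real_1 divide_inverse mult_1_left mult_1_right mult_ac)
    qed
  qed
  have hs: "((\<lambda>p. \<Sum>m\<in>{1..M}. (\<lambda>(b,bs). F m b * G m bs) p) has_sum
      (\<Sum>m\<in>{1..M}. Blk (z j ^ 2) M m * (of_real (1/(2*real m - 1)^(c (Suc j))) * Lf c z (Suc j) r m)))
      (UNIV \<times> {bs. length bs = Suc r})"
  proof (rule has_sum_finite_sum)
    fix m assume "m \<in> {1..M}"
    then have m1: "1 \<le> m" by simp
    show "((\<lambda>(b,bs). F m b * G m bs) has_sum Blk (z j ^ 2) M m * (of_real (1/(2*real m - 1)^(c (Suc j))) * Lf c z (Suc j) r m))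
       (UNIV \<times> {bs. length bs = Suc r})"
      unfolding F_def G_def
      by (rule has_sum_prod_Sigma[OF H_has_sum[OF m1 nz] has_sum_cmult_right[OF IH]])
  qed simp
  have hs2: "(((\<lambda>bs. of_real (tstar M (sidx c j bs)) * swt z j bs) \<circ> (\<lambda>(b,bs). b # bs)) has_sum
      (\<Sum>m\<in>{1..M}. Blk (z j ^ 2) M m * (of_real (1/(2*real m - 1)^(c (Suc j))) * Lf c z (Suc j) r m)))
      (UNIV \<times> {bs. length bs = Suc r})"
  proof -
    have "(((\<lambda>bs. of_real (tstar M (sidx c j bs)) * swt z j bs) \<circ> (\<lambda>(b,bs). b # bs)) has_sum
      (\<Sum>m\<in>{1..M}. Blk (z j ^ 2) M m * (of_real (1/(2*real m - 1)^(c (Suc j))) * Lf c z (Suc j) r m)))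
      (UNIV \<times> {bs. length bs = Suc r}) \<longleftrightarrow> ((\<lambda>p. \<Sum>m\<in>{1..M}. (\<lambda>(b,bs). F m b * G m bs) p) has_sum
      (\<Sum>m\<in>{1..M}. Blk (z j ^ 2) M m * (of_real (1/(2*real m - 1)^(c (Suc j))) * Lf c z (Suc j) r m)))
      (UNIV \<times> {bs. length bs = Suc r})"
      by (rule has_sum_cong, rule pt, assumption)
    then show ?thesis using hs by blast
  qed
  show ?case unfolding im has_sum_reindex[OF inj] Lf.simps
    using hs2 by (simp only: mult.assoc)
qed


fun Efun :: "(nat \<Rightarrow> nat) \<Rightarrow> (nat \<Rightarrow> nat \<Rightarrow> complex) \<Rightarrow> nat \<Rightarrow> nat \<Rightarrow> nat \<Rightarrow> complex" where
  "Efun c Q j 0 k = Q j k * of_real (gg 1 k)"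
| "Efun c Q j (Suc r) k = Q j k * (\<Sum>k'\<in>{1..k}. of_real (Phi (c (Suc j)) k k') * Efun c Q (Suc j) r k')"

definition Qz :: "(nat \<Rightarrow> complex) \<Rightarrow> nat \<Rightarrow> nat \<Rightarrow> complex" where
  "Qz z j k = of_real (xx k) / (of_real (xx k) - z j ^ 2)"

lemma xx_ne_w: "1 \<le> l \<Longrightarrow> norm (w::complex) < 1 \<Longrightarrow> w \<noteq> of_real (xx l)"
proof
  assume "1 \<le> l" "norm w < 1" "w = of_real (xx l)"
  then have "norm w = xx l" using xx_pos[of l] by simp
  then show False using xx_pos[OF \<open>1 \<le> l\<close>] \<open>norm w < 1\<close> by simp
qed

lemma dist3: "(\<Sum>k\<in>S. f k) * y * (\<Sum>k'\<in>T. g k') = (\<Sum>k\<in>S. \<Sum>k'\<in>T. f k * y * (g k' :: complex))"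
proof -
  have "(\<Sum>k\<in>S. f k) * y * (\<Sum>k'\<in>T. g k') = (\<Sum>k\<in>S. f k * y) * (\<Sum>k'\<in>T. g k')"
    by (simp only: sum_distrib_right)
  also have "\<dots> = (\<Sum>k\<in>S. f k * y * (\<Sum>k'\<in>T. g k'))" by (simp only: sum_distrib_right)
  also have "\<dots> = (\<Sum>k\<in>S. \<Sum>k'\<in>T. f k * y * g k')" by (simp only: sum_distrib_left)
  finally show ?thesis .
qed

lemma LE:
  assumes "\<forall>i. j \<le> i \<and> i \<le> j + r \<longrightarrow> norm (z i) < 1" "1 \<le> M"
  shows "Lf c z j r M = (\<Sum>k\<in>{1..M}. of_real (ff M k) * Efun c (Qz z) j r k)"
  using assms
proof (induction r arbitrary: j M)
  case 0
  have nw: "norm (z j ^ 2) < 1" using 0 by (simp add: norm_power power_less_one_iff)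
  have "Lf c z j 0 M = Blk (z j ^ 2) M 1" by simp
  also have "\<dots> = (\<Sum>k\<in>{1..M}. of_real (ff M k * gg 1 k) * (of_real (xx k) / (of_real (xx k) - z j ^ 2)))"
    using PF[OF le_refl 0(2)] xx_ne_w[OF _ nw] by auto
  also have "\<dots> = (\<Sum>k\<in>{1..M}. of_real (ff M k) * Efun c (Qz z) j 0 k)"
    by (rule sum.cong) (auto simp: Qz_def)
  finally show ?case .
next
  case (Suc r)
  have nw: "norm (z j ^ 2) < 1" using Suc.prems by (simp add: norm_power power_less_one_iff)
  define P where "P k = Qz z j k" for k
  define Y where "Y m = (of_real (1/(2*real m - 1)^(c (Suc j))) :: complex)" for m
  define E where "E k' = Efun c (Qz z) (Suc j) r k'" for k'
  have IH: "Lf c z (Suc j) r m = (\<Sum>k'\<in>{1..m}. of_real (ff m k') * E k')" if "1 \<le> m" for m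
    using Suc.IH[of "Suc j" m] Suc.prems that unfolding E_def by simp
  have B: "Blk (z j ^ 2) M m = (\<Sum>k\<in>{m..M}. of_real (ff M k * gg m k) * P k)" if "m \<in> {1..M}" for m
    using PF[of m M] that xx_ne_w[OF _ nw] unfolding P_def Qz_def by auto
  have "Lf c z j (Suc r) M = (\<Sum>m\<in>{1..M}. (\<Sum>k\<in>{m..M}. of_real (ff M k * gg m k) * P k) * Y m * (\<Sum>k'\<in>{1..m}. of_real (ff m k') * E k'))"
    unfolding Lf.simps Y_def by (rule sum.cong[OF refl]) (simp add: B IH)
  also have "\<dots> = (\<Sum>m\<in>{1..M}. \<Sum>k\<in>{m..M}. \<Sum>k'\<in>{1..m}. of_real (ff M k * gg m k) * P k * Y m * (of_real (ff m k') * E k'))"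
    by (rule sum.cong[OF refl]) (rule dist3)
  also have "\<dots> = (\<Sum>k\<in>{1..M}. \<Sum>m\<in>{1..k}. \<Sum>k'\<in>{1..m}. of_real (ff M k * gg m k) * P k * Y m * (of_real (ff m k') * E k'))"
    by (rule tri_swap[symmetric])
  also have "\<dots> = (\<Sum>k\<in>{1..M}. \<Sum>k'\<in>{1..k}. \<Sum>m\<in>{k'..k}. of_real (ff M k * gg m k) * P k * Y m * (of_real (ff m k') * E k'))"
    by (rule sum.cong[OF refl], rule tri_swap)
  also have "\<dots> = (\<Sum>k\<in>{1..M}. of_real (ff M k) * Efun c (Qz z) j (Suc r) k)"
  proof (rule sum.cong[OF refl])
    fix k assume "k \<in> {1..M}"
    have "(\<Sum>k'\<in>{1..k}. \<Sum>m\<in>{k'..k}. of_real (ff M k * gg m k) * P k * Y m * (of_real (ff m k') * E k'))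
        = (\<Sum>k'\<in>{1..k}. of_real (ff M k) * P k * (of_real (Phi (c (Suc j)) k k') * E k'))"
    proof (rule sum.cong[OF refl])
      fix k' assume "k' \<in> {1..k}"
      have "of_real (Phi (c (Suc j)) k k') = (\<Sum>m\<in>{k'..k}. of_real (gg m k) * Y m * of_real (ff m k') :: complex)"
        unfolding Phi_def Y_def of_real_sum by (rule sum.cong[OF refl]) (simp add: of_real_mult of_real_divide)
      then show "(\<Sum>m\<in>{k'..k}. of_real (ff M k * gg m k) * P k * Y m * (of_real (ff m k') * E k'))
          = of_real (ff M k) * P k * (of_real (Phi (c (Suc j)) k k') * E k')"
        by (simp add: sum_distrib_left sum_distrib_right mult_ac)
    qed
    also have "\<dots> = of_real (ff M k) * Efun c (Qz z) j (Suc r) k"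
      unfolding Efun.simps P_def E_def by (simp add: sum_distrib_left mult_ac)
    finally show "(\<Sum>k'\<in>{1..k}. \<Sum>m\<in>{k'..k}. of_real (ff M k * gg m k) * P k * Y m * (of_real (ff m k') * E k'))
        = of_real (ff M k) * Efun c (Qz z) j (Suc r) k" .
  qed
  finally show ?case .
qed

lemma Efun_cong: "(\<forall>i\<ge>j. Q1 i = Q2 i) \<Longrightarrow> Efun c Q1 j r k = Efun c Q2 j r k"
proof (induction r arbitrary: j k)
  case 0 then show ?case by simp
next
  case (Suc r)
  have "Efun c Q1 (Suc j) r k' = Efun c Q2 (Suc j) r k'" for k' using Suc by simp
  then show ?case using Suc.prems by simp
qed

lemma EDiff:
  assumes "\<forall>i. i \<noteq> u \<longrightarrow> Q1 i = Q2 i"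
  shows "j \<le> u \<Longrightarrow> u \<le> j + r \<Longrightarrow>
    Efun c Q1 j r k - Efun c Q2 j r k = Efun c (\<lambda>i k. if i = u then Q1 i k - Q2 i k else Q1 i k) j r k"
proof (induction r arbitrary: j k)
  case 0
  then have "j = u" by simp
  then show ?case by (simp add: algebra_simps)
next
  case (Suc r)
  define Q3 where "Q3 = (\<lambda>i k. if i = u then Q1 i k - Q2 i k else Q1 i k)"
  show ?case
  proof (cases "j = u")
    case True
    have e1: "Efun c Q2 (Suc j) r k' = Efun c Q1 (Suc j) r k'" for k'
      by (rule Efun_cong) (use assms True in auto)
    have e2: "Efun c Q3 (Suc j) r k' = Efun c Q1 (Suc j) r k'" for k'
      by (rule Efun_cong) (use True in \<open>auto simp: Q3_def\<close>)
    have q3: "Q3 j k = Q1 j k - Q2 j k" using True unfolding Q3_def by simp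
    show ?thesis unfolding Q3_def[symmetric] Efun.simps e1 e2 q3
      by (simp add: algebra_simps)
  next
    case False
    then have ju: "Suc j \<le> u" "u \<le> Suc j + r" using Suc.prems by auto
    have q: "Q2 j k = Q1 j k" "Q3 j k = Q1 j k" using assms False unfolding Q3_def by auto
    have "Efun c Q1 (Suc j) r k' - Efun c Q2 (Suc j) r k' = Efun c Q3 (Suc j) r k'" for k'
      using Suc.IH[OF ju] unfolding Q3_def .
    then have "(\<Sum>k'\<in>{1..k}. of_real (Phi (c (Suc j)) k k') * Efun c Q1 (Suc j) r k') - (\<Sum>k'\<in>{1..k}. of_real (Phi (c (Suc j)) k k') * Efun c Q2 (Suc j) r k')
      = (\<Sum>k'\<in>{1..k}. of_real (Phi (c (Suc j)) k k') * Efun c Q3 (Suc j) r k')"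
      by (simp add: sum_subtractf[symmetric] algebra_simps)
    then show ?thesis unfolding Q3_def[symmetric] Efun.simps q
      by (simp add: algebra_simps)
  qed
qed


definition Aa :: "nat \<Rightarrow> nat \<Rightarrow> real" where
  "Aa c K = (if c = 0 then (-1)^K / (2*real K - 1) else if c = 1 then 1 / (2*real K - 1)^2 else (-1)^K / (2*real K - 1)^3)"

definition Bb :: "nat \<Rightarrow> nat \<Rightarrow> real" where
  "Bb c k = (if c = 1 then 2*real k - 1 else (-1)^k)"

lemma neg1_diff: "k \<le> K \<Longrightarrow> ((-1)::real)^(K-k) = (-1)^K * (-1)^k"
proof -
  assume "k \<le> K"
  then have "((-1)::real)^K = (-1)^(K-k) * (-1)^k" by (simp add: power_add[symmetric])
  then have "((-1)::real)^K * (-1)^k = (-1)^(K-k) * ((-1)^k * (-1)^k)" by (simp add: mult.assoc)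
  also have "((-1)::real)^k * (-1)^k = 1" by (simp add: power_add[symmetric] flip: mult_2)
  finally show ?thesis by simp
qed

lemma PhiAB:
  assumes "1 \<le> c" "c \<noteq> 2" "1 \<le> k" "k \<le> K"
  shows "Phi c K k = NN K / NN k * Vsharp K k (replicate (c - 3) 1) * Aa c K * Bb c k"
proof (cases "c = 1")
  case True
  have K0: "2*real K - 1 \<noteq> 0" "2*real k - 1 \<noteq> 0" using assms by auto
  show ?thesis
  proof (cases "K = k")
    case True
    then show ?thesis using \<open>c = 1\<close> Phi1[OF assms(3) assms(4)] K0
      by (simp add: V0 Aa_def Bb_def tri_def power2_eq_square)
  next
    case False
    define X where "X = 2*real K - 1"
    define Y where "Y = 2*real k - 1"
    have XY: "X \<noteq> 0" "Y \<noteq> 0" "NN k \<noteq> 0" using K0 NN_pos[OF assms(3)] unfolding X_def Y_def by auto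
    have "NN K / NN k * 2 / X = NN K / NN k * (2 * (X / Y)) * (1 / X^2) * Y"
      using XY by (simp add: field_simps power2_eq_square)
    then show ?thesis using \<open>c = 1\<close> Phi1[OF assms(3) assms(4)] False
      unfolding X_def Y_def by (simp add: V0 Aa_def Bb_def tri_def)
  qed
next
  case False
  then have c3: "c = (c - 3) + 3" "c \<noteq> 0" "c \<noteq> 1" using assms by auto
  have "Phi c K k = Cd (c-3) K k" using PhiC[OF assms(3) assms(4), of "c-3"] c3(1) by simp
  then show ?thesis unfolding Cd_def Aa_def Bb_def using c3 neg1_diff[OF assms(4)]
    by (simp add: field_simps)
qed

lemma gg1': "1 \<le> K \<Longrightarrow> gg 1 K = NN K * (-2) * Aa 0 K"
  using gg1 by (simp add: Aa_def)


lemma delta3: "3 \<le> c \<Longrightarrow> delta c = 0"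
proof -
  assume "3 \<le> c"
  then have c: "c = Suc (Suc (Suc (c - 3)))" by simp
  show ?thesis by (subst c) simp
qed

lemma sign_lemma:
  fixes k ci cj :: nat
  assumes k1: "1 \<le> k" and ci: "ci = 1 \<or> 3 \<le> ci" and cj: "cj = 0 \<or> cj = 1 \<or> 3 \<le> cj"
  shows "complex_of_real (Bb ci k * Aa cj k) = (-1)^(k * (delta ci + delta cj)) * (2 * of_nat k - 1) powi (int (delta ci + delta cj) - 1) / (2 * of_nat k - 1)^2"
proof -
  define X where "X = (2 * of_nat k - 1 :: complex)"
  define s where "s = ((-1)::complex)^k"
  have rX: "complex_of_real (2*real k - 1) = X" unfolding X_def by simp
  have "2*real k - 1 \<noteq> 0" using k1 by simp
  then have X0: "X \<noteq> 0" by (metis rX of_real_eq_0_iff)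
  have s2: "s * s = 1" unfolding s_def by (simp add: power_add[symmetric] flip: mult_2)
  have sp: "((-1)::complex)^(k * m) = s^m" for m unfolding s_def by (simp add: power_mult)
  have sr: "complex_of_real ((-1)^k) = s" unfolding s_def by simp
  have Bb: "complex_of_real (Bb ci k) = (if ci = 1 then X else s)" unfolding Bb_def by (simp add: X_def s_def)
  have Aa: "complex_of_real (Aa cj k) = (if cj = 0 then s / X else if cj = 1 then 1 / X^2 else s / X^3)"
    unfolding Aa_def by (simp add: X_def s_def)
  have dci: "delta ci = (if ci = 1 then 1 else 0)" using ci delta3 by auto
  have dcj: "delta cj = (if cj = 0 then 2 else if cj = 1 then 1 else 0)" using cj delta3 by auto
  have main: "(if ci = 1 then X else s) * (if cj = 0 then s / X else if cj = 1 then 1 / X^2 else s / X^3)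
     = s ^ (delta ci + delta cj) * X powi (int (delta ci + delta cj) - 1) / X^2"
    using ci cj X0 s2 unfolding dci dcj
    by (auto simp: power_int_minus field_simps power2_eq_square power3_eq_cube eval_nat_numeral)
  show ?thesis unfolding of_real_mult Bb Aa sp X_def[symmetric] using main by simp
qed


definition Wt :: "nat \<Rightarrow> (nat \<Rightarrow> nat) \<Rightarrow> (nat \<Rightarrow> nat \<Rightarrow> complex) \<Rightarrow> nat \<Rightarrow> nat \<Rightarrow> nat \<Rightarrow> complex" where
  "Wt d c Q i kp k = of_real (Bb (c i) k * Aa (cext d c (Suc i)) k * Vsharp kp k (replicate (c i - 3) 1)) * Q i k"

fun NS :: "(nat \<Rightarrow> nat \<Rightarrow> nat \<Rightarrow> complex) \<Rightarrow> nat \<Rightarrow> nat \<Rightarrow> nat \<Rightarrow> nat \<Rightarrow> complex" where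
  "NS W j 0 kp M = (\<Sum>k\<in>{1..M}. W j kp k)"
| "NS W j (Suc r) kp M = (\<Sum>k\<in>{1..M}. W j kp k * NS W (Suc j) r k k)"

fun Rest :: "(nat \<Rightarrow> nat \<Rightarrow> nat \<Rightarrow> complex) \<Rightarrow> nat \<Rightarrow> nat \<Rightarrow> nat \<Rightarrow> complex" where
  "Rest W j 0 k = 1"
| "Rest W j (Suc r) k = NS W (Suc j) r k k"

lemma NS_Rest: "NS W j r kp M = (\<Sum>k\<in>{1..M}. W j kp k * Rest W j r k)"
  by (cases r) simp_all

lemma NS_cong: "(\<forall>i\<ge>j. W1 i = W2 i) \<Longrightarrow> NS W1 j r kp M = NS W2 j r kp M"
proof (induction r arbitrary: j kp M)
  case 0 then show ?case by simp
next
  case (Suc r)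
  have "NS W1 (Suc j) r k k = NS W2 (Suc j) r k k" for k using Suc by simp
  then show ?case using Suc.prems by simp
qed

lemma Rest_cong: "(\<forall>i>j. W1 i = W2 i) \<Longrightarrow> Rest W1 j r k = Rest W2 j r k"
  by (cases r) (auto intro!: NS_cong)

lemma cext_in: "1 \<le> i \<Longrightarrow> i \<le> d \<Longrightarrow> cext d c i = c i"
  unfolding cext_def by simp

lemma M2:
  assumes cond: "\<forall>i\<in>{1..d}. 1 \<le> c i \<and> c i \<noteq> 2"
  shows "j + r = d \<Longrightarrow> 1 \<le> k \<Longrightarrow> Efun c Q j r k = of_real (NN k) * (-2) * of_real (Aa (cext d c (Suc j)) k) * Q j k * Rest (Wt d c Q) j r k"
proof (induction r arbitrary: j k)
  case 0
  then have jd: "j = d" by simp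
  have "cext d c (Suc j) = 0" unfolding cext_def jd by simp
  then show ?case using gg1'[OF 0(2)] by (simp add: mult_ac)
next
  case (Suc r)
  define cj where "cj = c (Suc j)"
  have cj: "1 \<le> cj" "cj \<noteq> 2" using cond Suc.prems unfolding cj_def by auto
  have cx: "cext d c (Suc j) = cj" unfolding cj_def using Suc.prems by (simp add: cext_in)
  have IH: "Efun c Q (Suc j) r k' = of_real (NN k') * (-2) * of_real (Aa (cext d c (Suc (Suc j))) k') * Q (Suc j) k' * Rest (Wt d c Q) (Suc j) r k'"
    if "1 \<le> k'" for k' using Suc.IH[of "Suc j" k'] Suc.prems that by simp
  have "(\<Sum>k'\<in>{1..k}. of_real (Phi cj k k') * Efun c Q (Suc j) r k')
      = (\<Sum>k'\<in>{1..k}. of_real (NN k) * (-2) * of_real (Aa cj k) * (Wt d c Q (Suc j) k k' * Rest (Wt d c Q) (Suc j) r k'))"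
  proof (rule sum.cong[OF refl])
    fix k' assume k': "k' \<in> {1..k}"
    then have k1: "1 \<le> k'" "k' \<le> k" by auto
    have N0: "complex_of_real (NN k') \<noteq> 0" using NN_pos[OF k1(1)] by simp
    define R where "R = Rest (Wt d c Q) (Suc j) r k'"
    define V where "V = Vsharp k k' (replicate (cj - 3) 1)"
    have "of_real (Phi cj k k') * Efun c Q (Suc j) r k'
        = of_real (NN k) / of_real (NN k') * of_real V * of_real (Aa cj k) * of_real (Bb cj k') *
          (of_real (NN k') * (-2) * of_real (Aa (cext d c (Suc (Suc j))) k') * Q (Suc j) k' * R)"
      unfolding PhiAB[OF cj k1(1) k1(2)] IH[OF k1(1)] R_def V_def by simp
    also have "\<dots> = of_real (NN k) * (-2) * of_real (Aa cj k) *
          (of_real (Bb cj k' * Aa (cext d c (Suc (Suc j))) k' * V) * Q (Suc j) k' * R)"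
      using N0 by (simp add: field_simps)
    finally show "of_real (Phi cj k k') * Efun c Q (Suc j) r k' =
        of_real (NN k) * (-2) * of_real (Aa cj k) * (Wt d c Q (Suc j) k k' * Rest (Wt d c Q) (Suc j) r k')"
      unfolding Wt_def R_def V_def cj_def by (simp add: mult_ac)
  qed
  also have "\<dots> = of_real (NN k) * (-2) * of_real (Aa cj k) * Rest (Wt d c Q) j (Suc r) k"
    unfolding sum_distrib_left[symmetric] Rest.simps NS_Rest[of _ "Suc j"] ..
  finally show ?case unfolding Efun.simps cx cj_def[symmetric] by (simp add: mult_ac)
qed

definition Wtop :: "nat \<Rightarrow> nat \<Rightarrow> (nat \<Rightarrow> nat) \<Rightarrow> (nat \<Rightarrow> nat \<Rightarrow> complex) \<Rightarrow> nat \<Rightarrow> nat \<Rightarrow> nat \<Rightarrow> complex" where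
  "Wtop n d c Q i kp k = (if i = 0 then of_nat ((2*n-1) choose (n-k)) * (-2) * of_real (Aa (cext d c 1) k) * Q 0 k
     else Wt d c Q i kp k)"

lemma Top:
  assumes cond: "\<forall>i\<in>{1..d}. 1 \<le> c i \<and> c i \<noteq> 2"
  shows "(\<Sum>k\<in>{1..n}. of_real (ff n k) * Efun c Q 0 d k) = of_real (NN n) * NS (Wtop n d c Q) 0 d 0 n"
proof -
  have RR: "Rest (Wtop n d c Q) 0 d k = Rest (Wt d c Q) 0 d k" for k
    by (rule Rest_cong) (auto simp: Wtop_def fun_eq_iff)
  have "(\<Sum>k\<in>{1..n}. of_real (ff n k) * Efun c Q 0 d k) = (\<Sum>k\<in>{1..n}. of_real (NN n) * (Wtop n d c Q 0 0 k * Rest (Wtop n d c Q) 0 d k))"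
  proof (rule sum.cong[OF refl])
    fix k assume k: "k \<in> {1..n}"
    then have k1: "1 \<le> k" "k \<le> n" by auto
    have N0: "complex_of_real (NN k) \<noteq> 0" using NN_pos[OF k1(1)] by simp
    have "of_real (ff n k) * Efun c Q 0 d k = of_nat ((2*n-1) choose (n-k)) * of_real (NN n) / of_real (NN k) *
         (of_real (NN k) * (-2) * of_real (Aa (cext d c (Suc 0)) k) * Q 0 k * Rest (Wt d c Q) 0 d k)"
      unfolding ff_binom[OF k1] M2[OF cond, of 0 d, OF _ k1(1), simplified] by simp
    also have "\<dots> = of_real (NN n) * (Wtop n d c Q 0 0 k * Rest (Wtop n d c Q) 0 d k)"
      unfolding RR Wtop_def using N0 by (simp add: field_simps)
    finally show "of_real (ff n k) * Efun c Q 0 d k = of_real (NN n) * (Wtop n d c Q 0 0 k * Rest (Wtop n d c Q) 0 d k)" .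
  qed
  also have "\<dots> = of_real (NN n) * NS (Wtop n d c Q) 0 d 0 n"
    unfolding sum_distrib_left[symmetric] NS_Rest[of _ 0] ..
  finally show ?thesis .
qed


definition CH :: "nat \<Rightarrow> nat \<Rightarrow> nat list set" where
  "CH r M = {ks. length ks = Suc r \<and> ks!0 \<le> M \<and> 1 \<le> ks!r \<and> (\<forall>i<r. ks!Suc i \<le> ks!i)}"

lemma chains_CH: "chains n d = CH d n"
  unfolding chains_def CH_def by simp

lemma CH_ge_aux: "ks \<in> CH r M \<Longrightarrow> i + m = r \<Longrightarrow> ks!r \<le> ks!i"
proof (induction m arbitrary: i)
  case 0 then show ?case by simp
next
  case (Suc m)
  have "ks!r \<le> ks!Suc i" using Suc.IH[OF Suc.prems(1), of "Suc i"] Suc.prems(2) by simp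
  also have "ks!Suc i \<le> ks!i" using Suc.prems unfolding CH_def by auto
  finally show ?case .
qed

lemma CH_ge: "ks \<in> CH r M \<Longrightarrow> i \<le> r \<Longrightarrow> 1 \<le> ks!i"
  using CH_ge_aux[of ks r M i "r - i"] unfolding CH_def by auto

lemma CH_0: "CH 0 M = (\<lambda>k. [k]) ` {1..M}"
proof (intro set_eqI iffI)
  fix ks assume "ks \<in> CH 0 M"
  then obtain k where "ks = [k]" "1 \<le> k" "k \<le> M" unfolding CH_def
    by (auto simp: length_Suc_conv)
  then show "ks \<in> (\<lambda>k. [k]) ` {1..M}" by auto
next
  fix ks assume "ks \<in> (\<lambda>k. [k]) ` {1..M}"
  then show "ks \<in> CH 0 M" unfolding CH_def by auto
qed

lemma CH_Suc: "CH (Suc r) M = (\<lambda>(k,ks). k # ks) ` (SIGMA k:{1..M}. CH r k)"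
proof (intro set_eqI iffI)
  fix ks assume ks: "ks \<in> CH (Suc r) M"
  then obtain k ks' where e: "ks = k # ks'" "length ks' = Suc r" unfolding CH_def
    by (auto simp: length_Suc_conv)
  have k1: "1 \<le> k" using CH_ge[OF ks, of 0] e by simp
  have kM: "k \<le> M" using ks e unfolding CH_def by simp
  have "ks' \<in> CH r k"
  proof -
    have "ks'!0 \<le> k" using ks e unfolding CH_def by force
    moreover have "1 \<le> ks'!r" using ks e unfolding CH_def by simp
    moreover have "\<forall>i<r. ks'!Suc i \<le> ks'!i"
    proof (intro allI impI)
      fix i assume "i < r"
      then have "ks!Suc (Suc i) \<le> ks!Suc i" using ks unfolding CH_def by auto
      then show "ks'!Suc i \<le> ks'!i" using e by simp
    qed
    ultimately show ?thesis using e unfolding CH_def by simp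
  qed
  then show "ks \<in> (\<lambda>(k,ks). k # ks) ` (SIGMA k:{1..M}. CH r k)" using e k1 kM by force
next
  fix ks assume "ks \<in> (\<lambda>(k,ks). k # ks) ` (SIGMA k:{1..M}. CH r k)"
  then obtain k ks' where e: "ks = k # ks'" "k \<in> {1..M}" "ks' \<in> CH r k" by auto
  have "\<forall>i<Suc r. ks!Suc i \<le> ks!i"
  proof (intro allI impI)
    fix i assume i: "i < Suc r"
    show "ks!Suc i \<le> ks!i"
    proof (cases i)
      case 0 then show ?thesis using e unfolding CH_def by simp
    next
      case (Suc i') then show ?thesis using e i unfolding CH_def by simp
    qed
  qed
  then show "ks \<in> CH (Suc r) M" using e unfolding CH_def by simp
qed

lemma CH_finite: "finite (CH r M)"
proof (induction r arbitrary: M)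
  case 0 then show ?case unfolding CH_0 by simp
next
  case (Suc r) then show ?case unfolding CH_Suc by (intro finite_imageI finite_SigmaI) auto
qed

lemma chain_sum:
  "(\<Sum>ks\<in>CH r M. \<Prod>i\<le>r. W (j+i) (if i = 0 then kp else ks!(i-1)) (ks!i)) = NS W j r kp M"
proof (induction r arbitrary: j kp M)
  case 0
  have inj: "inj_on (\<lambda>k. [k]) {1..M}" by (simp add: inj_on_def)
  show ?case unfolding CH_0 sum.reindex[OF inj] by simp
next
  case (Suc r)
  have inj: "inj_on (\<lambda>(k,ks). k # ks) (SIGMA k:{1..M}. CH r k)" by (simp add: inj_on_def)
  have sig: "(\<Sum>k\<in>{1..M}. \<Sum>ks\<in>CH r k. g k ks) = (\<Sum>(k,ks)\<in>(SIGMA k:{1..M}. CH r k). g k ks)" for g :: "nat \<Rightarrow> nat list \<Rightarrow> complex"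
    by (rule sum.Sigma) (auto simp: CH_finite)
  have "(\<Sum>ks\<in>CH (Suc r) M. \<Prod>i\<le>Suc r. W (j+i) (if i = 0 then kp else ks!(i-1)) (ks!i))
      = (\<Sum>(k,ks)\<in>(SIGMA k:{1..M}. CH r k). \<Prod>i\<le>Suc r. W (j+i) (if i = 0 then kp else (k#ks)!(i-1)) ((k#ks)!i))"
    unfolding CH_Suc sum.reindex[OF inj] by (simp add: case_prod_unfold)
  also have "\<dots> = (\<Sum>k\<in>{1..M}. \<Sum>ks\<in>CH r k. W j kp k * (\<Prod>i\<le>r. W (Suc j+i) (if i = 0 then k else ks!(i-1)) (ks!i)))"
    unfolding sig
    by (rule sum.cong[OF refl]) (auto simp: prod.atMost_Suc_shift nth_Cons' simp del: prod.atMost_Suc)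
  also have "\<dots> = NS W j (Suc r) kp M"
    unfolding NS.simps sum_distrib_left[symmetric] Suc.IH ..
  finally show ?case .
qed


definition Q3 :: "(nat \<Rightarrow> complex) \<Rightarrow> nat \<Rightarrow> nat \<Rightarrow> nat \<Rightarrow> complex" where
  "Q3 z u i k = (if i = u then Qz z u k - Qz (z(u := 0)) u k else Qz z i k)"

lemma X_facts:
  assumes "1 \<le> k" "norm (w::complex) < 1"
  shows "(2 * of_nat k - 1 :: complex) \<noteq> 0" "(2 * of_nat k - 1)^2 - w \<noteq> 0"
    "complex_of_real (xx k) = (2 * of_nat k - 1)^2"
proof -
  show x: "complex_of_real (xx k) = (2 * of_nat k - 1)^2" unfolding xx_def by simp
  have "2*real k - 1 \<noteq> 0" using assms by simp
  then have a: "complex_of_real (2*real k - 1) \<noteq> 0" by (simp only: of_real_eq_0_iff not_False_eq_True)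
  have b: "complex_of_real (2*real k - 1) = 2 * of_nat k - 1" by simp
  show "(2 * of_nat k - 1 :: complex) \<noteq> 0" using a unfolding b .
  show "(2 * of_nat k - 1)^2 - w \<noteq> 0" using xx_ne_w[OF assms] unfolding x by simp
qed

lemma Q3_val:
  assumes "1 \<le> k" "norm (z i) < 1" "norm (z u) < 1"
  shows "Q3 z u i k = (if i = u then z u^2/((2* of_nat k - 1)^2 - z u^2) else (2* of_nat k - 1)^2/((2* of_nat k - 1)^2 - z i^2))"
proof (cases "i = u")
  case True
  define X2 where "X2 = (2* of_nat k - 1 :: complex)^2"
  have nw: "norm (z u ^ 2) < 1" using assms by (simp add: norm_power power_less_one_iff)
  have f: "X2 \<noteq> 0" "X2 - z u^2 \<noteq> 0" "complex_of_real (xx k) = X2"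
    using X_facts[OF assms(1) nw] unfolding X2_def by auto
  have "Q3 z u i k = X2 / (X2 - z u^2) - X2 / (X2 - 0)" unfolding Q3_def Qz_def f(3) using True by simp
  also have "\<dots> = z u^2 / (X2 - z u^2)" using f by (simp add: field_simps)
  finally show ?thesis unfolding X2_def using True by simp
next
  case False
  then show ?thesis unfolding Q3_def Qz_def xx_def by simp
qed

lemma FL:
  assumes cond: "\<forall>i\<in>{1..d}. 1 \<le> c i \<and> c i \<noteq> 2"
    and "u \<le> d" "i \<le> d" "1 \<le> k" "i = 0 \<longrightarrow> kp = 0" "norm (z i) < 1" "norm (z u) < 1"
  shows "Wtop n d c (Q3 z u) i kp k =
    (if i = 0 then of_nat ((2*n-1) choose (n-k)) else 1) * (if i = u then z u^2 / (2* of_nat k - 1)^2 else 1) *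
    ((-1)^(k * deltas d c i) * (2* of_nat k - 1) powi (int (deltas d c i) - 1) / ((2* of_nat k - 1)^2 - z i^2)
      * of_real (Vsharp kp k (replicate (cext d c i - 3) 1)))"
proof -
  define X where "X = (2* of_nat k - 1 :: complex)"
  define w where "w = z i ^ 2"
  define P where "P = (-1)^(k * deltas d c i) * X powi (int (deltas d c i) - 1)"
  have nw: "norm w < 1" unfolding w_def using assms(6) by (simp add: norm_power power_less_one_iff)
  have X0: "X \<noteq> 0" "X^2 - w \<noteq> 0" using X_facts[OF assms(4) nw] unfolding X_def by auto
  have rX: "complex_of_real (2*real k - 1) = X" unfolding X_def by simp
  have cj: "cext d c (Suc i) = 0 \<or> cext d c (Suc i) = 1 \<or> 3 \<le> cext d c (Suc i)"
  proof (cases "i = d")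
    case True then show ?thesis unfolding cext_def by simp
  next
    case False
    then have "1 \<le> Suc i" "Suc i \<le> d" using assms by auto
    then have "1 \<le> c (Suc i)" "c (Suc i) \<noteq> 2" using cond by auto
    then show ?thesis unfolding cext_def by auto
  qed
  have Q: "Q3 z u i k = (if i = u then w / (X^2 - w) else X^2 / (X^2 - w))"
    using Q3_val[OF assms(4) assms(6) assms(7)] unfolding X_def w_def by auto
  show ?thesis
  proof (cases "i = 0")
    case True
    then have kp: "kp = 0" using assms by simp
    have ds: "deltas d c i = delta 1 + delta (cext d c 1)" unfolding deltas_def cext_def True by simp
    have sl: "complex_of_real (Bb 1 k * Aa (cext d c 1) k) = P / X^2"
      using sign_lemma[of k 1 "cext d c 1"] assms(4) cj True unfolding P_def X_def ds by simp
    have Bb1: "complex_of_real (Bb 1 k) = X" unfolding Bb_def using rX by simp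
    have A: "complex_of_real (Aa (cext d c 1) k) = P / X^3"
    proof -
      have "X * complex_of_real (Aa (cext d c 1) k) = P / X^2" using sl unfolding of_real_mult Bb1 .
      then show ?thesis using X0 by (simp add: field_simps power2_eq_square power3_eq_cube)
    qed
    have V: "complex_of_real (Vsharp 0 k []) = - 2 / X"
      using assms(4) unfolding V0 tri_def X_def by simp
    have c0: "cext d c 0 = 1" unfolding cext_def by simp
    define C where "C = (of_nat ((2*n-1) choose (n-k)) :: complex)"
    have "Wtop n d c (Q3 z u) 0 0 k = C * (-2) * (P / X^3) * (if 0 = u then w / (X^2 - w) else X^2 / (X^2 - w))"
      unfolding Wtop_def A C_def using Q True by simp
    also have "\<dots> = C * (if 0 = u then w / X^2 else 1) * (P / (X^2 - w) * (- 2 / X))"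
      using X0 by (auto simp: field_simps power2_eq_square power3_eq_cube)
    finally show ?thesis unfolding True kp c0 V[symmetric] P_def C_def X_def[symmetric] w_def[symmetric]
      using True by (simp add: w_def)
  next
    case False
    then have i1: "1 \<le> i" by simp
    have ci: "c i = 1 \<or> 3 \<le> c i" using cond i1 assms(3) by force
    have cx: "cext d c i = c i" using cext_in[OF i1 assms(3)] .
    have ds: "deltas d c i = delta (c i) + delta (cext d c (Suc i))" unfolding deltas_def cx ..
    have sl: "complex_of_real (Bb (c i) k * Aa (cext d c (Suc i)) k) = P / X^2"
      using sign_lemma[OF assms(4) ci cj] unfolding P_def X_def ds by simp
    define V where "V = complex_of_real (Vsharp kp k (replicate (c i - 3) 1))"
    have "Wtop n d c (Q3 z u) i kp k = P / X^2 * V * (if i = u then w / (X^2 - w) else X^2 / (X^2 - w))"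
      unfolding Wtop_def Wt_def using False Q sl unfolding V_def by (simp add: of_real_mult)
    also have "\<dots> = (if i = u then w / X^2 else 1) * (P / (X^2 - w) * V)"
      using X0 by (auto simp: field_simps power2_eq_square)
    finally show ?thesis unfolding cx P_def V_def X_def[symmetric] w_def[symmetric] using False
      by (simp add: w_def)
  qed
qed


lemma PW:
  assumes cond: "\<forall>i\<in>{1..d}. 1 \<le> c i \<and> c i \<noteq> 2" and ud: "u \<le> d"
    and nz: "\<forall>i\<le>d. norm (z i) < 1" and ks: "ks \<in> CH d n"
  shows "(\<Prod>i\<le>d. Wtop n d c (Q3 z u) i (if i = 0 then 0 else ks!(i-1)) (ks!i)) =
    z u ^ 2 * (of_nat ((2 * n - 1) choose (n - ks ! 0)) / (2 * of_nat (ks ! u) - 1) ^ 2 *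
         (\<Prod>i\<le>d. (- 1) ^ (ks ! i * deltas d c i)
                    * (2 * of_nat (ks ! i) - 1) powi (int (deltas d c i) - 1)
                    / ((2 * of_nat (ks ! i) - 1) ^ 2 - z i ^ 2)
                    * complex_of_real (Vsharp (kprev ks i) (ks ! i) (replicate (cext d c i - 3) 1))))"
proof -
  define F where "F i = (- 1) ^ (ks ! i * deltas d c i)
                    * (2 * of_nat (ks ! i) - 1) powi (int (deltas d c i) - 1)
                    / ((2 * of_nat (ks ! i) - 1) ^ 2 - z i ^ 2)
                    * complex_of_real (Vsharp (kprev ks i) (ks ! i) (replicate (cext d c i - 3) 1))" for i
  have each: "Wtop n d c (Q3 z u) i (if i = 0 then 0 else ks!(i-1)) (ks!i) =
      (if i = 0 then of_nat ((2*n-1) choose (n - ks!i)) else 1) * (if i = u then z u^2 / (2 * of_nat (ks!i) - 1)^2 else 1) * F i"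
    if "i \<in> {..d}" for i
  proof -
    have i: "i \<le> d" using that by simp
    have k1: "1 \<le> ks!i" using CH_ge[OF ks i] .
    show ?thesis unfolding F_def kprev_def
      using FL[OF cond ud i k1, of "if i = 0 then 0 else ks!(i-1)" z n] nz i ud by simp
  qed
  have "(\<Prod>i\<le>d. Wtop n d c (Q3 z u) i (if i = 0 then 0 else ks!(i-1)) (ks!i)) =
     (\<Prod>i\<le>d. (if i = 0 then of_nat ((2*n-1) choose (n - ks!i)) else 1)) *
     (\<Prod>i\<le>d. (if i = u then z u^2 / (2 * of_nat (ks!i) - 1)^2 else 1)) * (\<Prod>i\<le>d. F i)"
    unfolding prod.distrib[symmetric] by (rule prod.cong[OF refl]) (rule each)
  also have "\<dots> = of_nat ((2*n-1) choose (n - ks!0)) * (z u^2 / (2 * of_nat (ks!u) - 1)^2) * (\<Prod>i\<le>d. F i)"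
    using ud by (simp add: prod.delta)
  finally show ?thesis unfolding F_def by (simp add: mult_ac)
qed

theorem corollary2p3:
  fixes n d u :: nat and c :: "nat \<Rightarrow> nat" and z :: "nat \<Rightarrow> complex"
  assumes "n \<ge> 1"
    and "\<forall>i\<in>{1..d}. c i \<ge> 1 \<and> c i \<noteq> 2"
    and "\<forall>i\<le>d. norm (z i) < 1"
    and "u \<le> d"
  shows "((\<lambda>a. complex_of_real (tstar n (tidx d c a)) * (\<Prod>i\<le>d. z i ^ (2 * (a ! i))))
     has_sum
     (z u ^ 2 * complex_of_real (real n * real (2 * n choose n) / 2 ^ (4 * n - 2)) *
      (\<Sum>ks\<in>chains n d.
         of_nat ((2 * n - 1) choose (n - ks ! 0)) / (2 * of_nat (ks ! u) - 1) ^ 2 *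
         (\<Prod>i\<le>d. (- 1) ^ (ks ! i * deltas d c i)
                    * (2 * of_nat (ks ! i) - 1) powi (int (deltas d c i) - 1)
                    / ((2 * of_nat (ks ! i) - 1) ^ 2 - z i ^ 2)
                    * complex_of_real (Vsharp (kprev ks i) (ks ! i) (replicate (cext d c i - 3) 1))))))
     {a. length a = Suc d \<and> a ! u \<ge> 1}"
proof -
  have cond: "\<forall>i\<in>{1..d}. 1 \<le> c i \<and> c i \<noteq> 2" using assms(2) by simp
  define z' where "z' = z(u := 0)"
  define fz where "fz = (\<lambda>zz a. complex_of_real (tstar n (tidx d c a)) * (\<Prod>i\<le>d. zz i ^ (2 * (a ! i))))"
  have nz: "\<forall>i. 0 \<le> i \<and> i \<le> 0 + d \<longrightarrow> norm (z i) < 1" using assms(3) by simp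
  have nz': "\<forall>i. 0 \<le> i \<and> i \<le> 0 + d \<longrightarrow> norm (z' i) < 1" using assms(3) unfolding z'_def by simp
  have conv: "complex_of_real (tstar n (sidx c 0 a)) * swt zz 0 a = fz zz a" if "a \<in> {a. length a = Suc d}" for zz a
  proof -
    have l: "length a = Suc d" using that by simp
    show ?thesis unfolding fz_def tidx_sidx[OF l] swt_prod l lessThan_Suc_atMost by simp
  qed
  have GFz: "(fz zz has_sum Lf c zz 0 d n) {a. length a = Suc d}"
    if "\<forall>i. 0 \<le> i \<and> i \<le> 0 + d \<longrightarrow> norm (zz i) < 1" for zz
  proof -
    have "((\<lambda>a. complex_of_real (tstar n (sidx c 0 a)) * swt zz 0 a) has_sum Lf c zz 0 d n) {a. length a = Suc d}"
      by (rule GF[OF that])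
    moreover have "((\<lambda>a. complex_of_real (tstar n (sidx c 0 a)) * swt zz 0 a) has_sum Lf c zz 0 d n) {a. length a = Suc d}
       \<longleftrightarrow> (fz zz has_sum Lf c zz 0 d n) {a. length a = Suc d}"
      by (rule has_sum_cong, rule conv, assumption)
    ultimately show ?thesis by blast
  qed
  have G1: "(fz z has_sum Lf c z 0 d n) {a. length a = Suc d}" using GFz[OF nz] .
  have G2: "(fz z' has_sum Lf c z' 0 d n) {a. length a = Suc d}" using GFz[OF nz'] .
  have G3: "(fz z has_sum Lf c z' 0 d n) {a. length a = Suc d \<and> a ! u = 0}"
  proof -
    have "(fz z' has_sum Lf c z' 0 d n) {a. length a = Suc d} \<longleftrightarrow> (fz z has_sum Lf c z' 0 d n) {a. length a = Suc d \<and> a ! u = 0}"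
    proof (rule has_sum_cong_neutral)
      fix a :: "nat list" assume "a \<in> {a. length a = Suc d \<and> a ! u = 0} - {a. length a = Suc d}"
      then show "fz z a = 0" by auto
    next
      fix a :: "nat list" assume a: "a \<in> {a. length a = Suc d} - {a. length a = Suc d \<and> a ! u = 0}"
      have "(\<Prod>i\<le>d. z' i ^ (2 * (a ! i))) = 0"
        using a assms(4) unfolding z'_def by (intro prod_zero) auto
      then show "fz z' a = 0" unfolding fz_def by simp
    next
      fix a :: "nat list" assume a: "a \<in> {a. length a = Suc d} \<inter> {a. length a = Suc d \<and> a ! u = 0}"
      have "z' i ^ (2 * (a ! i)) = z i ^ (2 * (a ! i))" for i
        using a unfolding z'_def by (cases "i = u") auto
      then show "fz z' a = fz z a" unfolding fz_def by simp
    qed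
    then show ?thesis using G2 by blast
  qed
  have G4: "(fz z has_sum (Lf c z 0 d n - Lf c z' 0 d n)) ({a. length a = Suc d} - {a. length a = Suc d \<and> a ! u = 0})"
    by (rule has_sum_Diff[OF G1 G3]) auto
  have seteq: "{a :: nat list. length a = Suc d} - {a. length a = Suc d \<and> a ! u = 0} = {a. length a = Suc d \<and> a ! u \<ge> 1}"
    by auto
  define W where "W = Wtop n d c (Q3 z u)"
  have QQ: "(\<lambda>i k. if i = u then Qz z i k - Qz z' i k else Qz z i k) = Q3 z u"
    unfolding Q3_def z'_def fun_eq_iff by auto
  have "Lf c z 0 d n - Lf c z' 0 d n = (\<Sum>k\<in>{1..n}. of_real (ff n k) * (Efun c (Qz z) 0 d k - Efun c (Qz z') 0 d k))"
    unfolding LE[OF nz assms(1)] LE[OF nz' assms(1)] by (simp add: sum_subtractf algebra_simps)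
  also have "\<dots> = (\<Sum>k\<in>{1..n}. of_real (ff n k) * Efun c (Q3 z u) 0 d k)"
  proof (rule sum.cong[OF refl])
    fix k
    have "\<forall>i. i \<noteq> u \<longrightarrow> Qz z i = Qz z' i" unfolding z'_def Qz_def fun_eq_iff by auto
    from EDiff[OF this, of 0 d c k] assms(4) show "of_real (ff n k) * (Efun c (Qz z) 0 d k - Efun c (Qz z') 0 d k) = of_real (ff n k) * Efun c (Q3 z u) 0 d k"
      unfolding QQ by simp
  qed
  also have "\<dots> = of_real (NN n) * NS W 0 d 0 n" unfolding W_def by (rule Top[OF cond])
  also have "NS W 0 d 0 n = (\<Sum>ks\<in>CH d n. \<Prod>i\<le>d. W i (if i = 0 then 0 else ks!(i-1)) (ks!i))"
    using chain_sum[where r=d and M=n and W=W and j=0 and kp=0] by simp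
  also have "\<dots> = (\<Sum>ks\<in>chains n d. z u ^ 2 * (of_nat ((2 * n - 1) choose (n - ks ! 0)) / (2 * of_nat (ks ! u) - 1) ^ 2 *
         (\<Prod>i\<le>d. (- 1) ^ (ks ! i * deltas d c i)
                    * (2 * of_nat (ks ! i) - 1) powi (int (deltas d c i) - 1)
                    / ((2 * of_nat (ks ! i) - 1) ^ 2 - z i ^ 2)
                    * complex_of_real (Vsharp (kprev ks i) (ks ! i) (replicate (cext d c i - 3) 1)))))"
    unfolding chains_CH W_def by (rule sum.cong[OF refl]) (rule PW[OF cond assms(4) assms(3)])
  finally have val: "Lf c z 0 d n - Lf c z' 0 d n = z u ^ 2 * complex_of_real (real n * real (2 * n choose n) / 2 ^ (4 * n - 2)) *
      (\<Sum>ks\<in>chains n d.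
         of_nat ((2 * n - 1) choose (n - ks ! 0)) / (2 * of_nat (ks ! u) - 1) ^ 2 *
         (\<Prod>i\<le>d. (- 1) ^ (ks ! i * deltas d c i)
                    * (2 * of_nat (ks ! i) - 1) powi (int (deltas d c i) - 1)
                    / ((2 * of_nat (ks ! i) - 1) ^ 2 - z i ^ 2)
                    * complex_of_real (Vsharp (kprev ks i) (ks ! i) (replicate (cext d c i - 3) 1))))"
    unfolding NN_def sum_distrib_left[symmetric] by (simp add: mult_ac)
  show ?thesis using G4 unfolding seteq val fz_def .
qed

end
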